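(* Let $\phi$ be a finite-range repulsive pair potential on $\mathbb{R}^d$ and let $\lambda>0$ be such that strong spatial mixing holds for all activity functions bounded by $\lambda$. Then $$p(\lambda)=\int_0^1\frac{\rho_{t\lambda}(0)}{t}\,dt,$$ where $\rho_{t\lambda}$ is the one-point density for the constant activity $t\lambda$ on $\mathbb{R}^d$.
   Context: $\phi$ symmetric, $\phi\ge0$, $\phi(x)=0$ for $\|x\|>r$; $H=\sum_{i<j}\phi(x_i-x_j)$; $Z_\Lambda(\lambda)=1+\sum_{k\ge1}\frac{\lambda^k}{k!}\int_{\Lambda^k}e^{-H}dx$; $p(\lambda)=\lim_n(2n)^{-d}\log Z_{[-n,n]^d}(\lambda)$. Strong spatial mixing for activities bounded by $\lambda$: there are $\alpha,\beta>0$ such that the total variation distance between the restrictions to bounded $\Lambda$ of Gibbs point processes $\mu_{\boldsymbol{\lambda}},\mu_{\boldsymbol{\lambda}'}$ (density $\prod\boldsymbol{\lambda}(x_i)e^{-H}/Z(\boldsymbol{\lambda})$) is at most $\alpha|\Lambda|e^{-\beta\,\mathrm{dist}(\Lambda,\supp(\boldsymbol{\lambda}-\boldsymbol{\lambda}'))}$ for all activity functions $\boldsymbol{\lambda},\boldsymbol{\lambda}'\le\lambda$. $\rho_{\boldsymbol{\lambda}}(v)=\boldsymbol{\lambda}(v)\mathbb{E}_{\mu_{\boldsymbol{\lambda}}}e^{-\sum_{x\in\mathbf X}\phi(v-x)}$, extended to unbounded support by $\rho_{\boldsymbol{\lambda}}(v)=\lim_n\rho_{\boldsymbol{\lambda}\mathbf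 1_{B_n}}(v)$, $B_n$ the ball of radius $n$ at $0$. *)

theory Defs
  imports "HOL-Analysis.Analysis"
begin

text \<open>Configurations of k points in R^d are functions x :: nat => 'a restricted to {..<k},
  integrated against the product Lebesgue measure PiM {..<k} (%_. lborel).\<close>

definition pot_ok :: "('a::euclidean_space \<Rightarrow> real) \<Rightarrow> bool" where
  "pot_ok \<phi> \<longleftrightarrow> \<phi> \<in> borel_measurable borel \<and> (\<forall>x. \<phi> (- x) = \<phi> x) \<and> (\<forall>x. 0 \<le> \<phi> x)
     \<and> (\<exists>r. \<forall>x. norm x > r \<longrightarrow> \<phi> x = 0)"

definition ham :: "('a::euclidean_space \<Rightarrow> real) \<Rightarrow> nat \<Rightarrow> (nat \<Rightarrow> 'a) \<Rightarrow> real" where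
  "ham \<phi> k x = (\<Sum>j<k. \<Sum>i<j. \<phi> (x i - x j))"

definition Zbox :: "('a::euclidean_space \<Rightarrow> real) \<Rightarrow> 'a set \<Rightarrow> real \<Rightarrow> ennreal" where
  "Zbox \<phi> \<Lambda> lam = 1 + (\<Sum>n. ennreal (lam ^ Suc n / fact (Suc n)) *
      (\<integral>\<^sup>+ x. indicator (PiE {..<Suc n} (\<lambda>_. \<Lambda>)) x * ennreal (exp (- ham \<phi> (Suc n) x))
         \<partial>(PiM {..<Suc n} (\<lambda>_. lborel))))"

definition press_seq :: "('a::euclidean_space \<Rightarrow> real) \<Rightarrow> real \<Rightarrow> nat \<Rightarrow> real" where
  "press_seq \<phi> lam n =
     ln (enn2real (Zbox \<phi> (cbox (- (real n *\<^sub>R One)) (real n *\<^sub>R One)) lam)) / (2 * real n) ^ DIM('a)"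

text \<open>Gibbs weighted sum  g(empty) + sum_{k>=1} 1/k! int prod_i lam(x_i) e^{-H(x)} g_k(x) dx,
  so that the Gibbs expectation of g is gsum phi lam g / gsum phi lam 1.\<close>
definition gsum :: "('a::euclidean_space \<Rightarrow> real) \<Rightarrow> ('a \<Rightarrow> real) \<Rightarrow> (nat \<Rightarrow> (nat \<Rightarrow> 'a) \<Rightarrow> real) \<Rightarrow> ennreal" where
  "gsum \<phi> f g = ennreal (g 0 (\<lambda>_. undefined)) + (\<Sum>n. ennreal (1 / fact (Suc n)) *
      (\<integral>\<^sup>+ x. ennreal ((\<Prod>i<Suc n. f (x i)) * exp (- ham \<phi> (Suc n) x) * g (Suc n) x)
         \<partial>(PiM {..<Suc n} (\<lambda>_. lborel))))"

definition Zact :: "('a::euclidean_space \<Rightarrow> real) \<Rightarrow> ('a \<Rightarrow> real) \<Rightarrow> ennreal" where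
  "Zact \<phi> f = gsum \<phi> f (\<lambda>k x. 1)"

text \<open>Probability under the Gibbs point process mu_lambda that the restriction X cap Lambda
  of the configuration X lies in the event A (a set of finite point sets).\<close>
definition gibbs_prob :: "('a::euclidean_space \<Rightarrow> real) \<Rightarrow> ('a \<Rightarrow> real) \<Rightarrow> 'a set \<Rightarrow> 'a set set \<Rightarrow> real" where
  "gibbs_prob \<phi> f \<Lambda> A =
     enn2real (gsum \<phi> f (\<lambda>k x. indicator A (x ` {..<k} \<inter> \<Lambda>))) / enn2real (Zact \<phi> f)"

definition config_event :: "'a::euclidean_space set set \<Rightarrow> bool" where
  "config_event A \<longleftrightarrow> (\<forall>k::nat. {x \<in> space (PiM {..<k} (\<lambda>_. (lborel :: 'a measure))). x ` {..<k} \<in> A}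
                              \<in> sets (PiM {..<k} (\<lambda>_. (lborel :: 'a measure))))"

text \<open>Activity functions bounded by lambda (bounded support, so the Gibbs process is defined).\<close>
definition activity_le :: "real \<Rightarrow> ('a::euclidean_space \<Rightarrow> real) \<Rightarrow> bool" where
  "activity_le lam f \<longleftrightarrow> f \<in> borel_measurable borel \<and> (\<forall>x. 0 \<le> f x \<and> f x \<le> lam)
      \<and> bounded {x. f x \<noteq> 0}"

text \<open>Strong spatial mixing for activities bounded by lambda (total variation distance of the
  restrictions to Lambda written out as the supremum over events).\<close>
definition ssm :: "('a::euclidean_space \<Rightarrow> real) \<Rightarrow> real \<Rightarrow> bool" where
  "ssm \<phi> lam \<longleftrightarrow> (\<exists>\<alpha>>0. \<exists>\<beta>>0. \<forall>f g \<Lambda> A.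
      activity_le lam f \<longrightarrow> activity_le lam g \<longrightarrow> \<Lambda> \<in> sets lborel \<longrightarrow> bounded \<Lambda> \<longrightarrow>
      config_event A \<longrightarrow>
      \<bar>gibbs_prob \<phi> f \<Lambda> A - gibbs_prob \<phi> g \<Lambda> A\<bar>
        \<le> \<alpha> * measure lborel \<Lambda> * exp (- \<beta> * setdist \<Lambda> (closure {x. f x \<noteq> g x})))"

definition rho_fin :: "('a::euclidean_space \<Rightarrow> real) \<Rightarrow> ('a \<Rightarrow> real) \<Rightarrow> 'a \<Rightarrow> real" where
  "rho_fin \<phi> f v = f v *
     (enn2real (gsum \<phi> f (\<lambda>k x. exp (- (\<Sum>i<k. \<phi> (v - x i))))) / enn2real (Zact \<phi> f))"

definition rho :: "('a::euclidean_space \<Rightarrow> real) \<Rightarrow> ('a \<Rightarrow> real) \<Rightarrow> 'a \<Rightarrow> real" where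
  "rho \<phi> f v = (if bounded {x. f x \<noteq> 0} then rho_fin \<phi> f v
      else lim (\<lambda>n. rho_fin \<phi> (\<lambda>x. f x * indicator (ball 0 (real n)) x) v))"

end

theory Submission
  imports Defs
begin


abbreviation PP :: "nat \<Rightarrow> ('a::euclidean_space) itself \<Rightarrow> (nat \<Rightarrow> 'a) measure" where
  "PP k t \<equiv> PiM {..<k} (\<lambda>_. lborel)"

lemma psf_lborel: "product_sigma_finite (\<lambda>_::nat. (lborel::'a::euclidean_space measure))"
  by (simp add: product_sigma_finite_def lborel.sigma_finite_measure_axioms)

lemma distr_PiM_transl:
  fixes v :: "'a::euclidean_space" and k :: nat
  shows "distr (PiM {..<k} (\<lambda>_. lborel)) (PiM {..<k} (\<lambda>_. lborel)) (\<lambda>x. restrict (\<lambda>i. v + x i) {..<k})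
     = PiM {..<k} (\<lambda>_. (lborel::'a measure))"
proof (rule product_sigma_finite.PiM_eqI[OF psf_lborel])
  fix A assume A: "\<And>i. i \<in> {..<k} \<Longrightarrow> A i \<in> sets (lborel::'a measure)"
  have pre: "(+) v -` A i \<in> sets borel" if "i < k" for i
  proof -
    have "((+) v) \<in> borel_measurable (borel::'a measure)" by simp
    from measurable_sets[OF this, of "A i"] A[of i] that show ?thesis by simp
  qed
  have meas: "(\<lambda>x. restrict (\<lambda>i. v + x i) {..<k}) \<in> PiM {..<k} (\<lambda>_. lborel) \<rightarrow>\<^sub>M PiM {..<k} (\<lambda>_. (lborel::'a measure))"
    by measurable
  have "emeasure (distr (PiM {..<k} (\<lambda>_. lborel)) (PiM {..<k} (\<lambda>_. lborel)) (\<lambda>x. restrict (\<lambda>i. v + x i) {..<k})) (Pi\<^sub>E {..<k} A)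
      = emeasure (PiM {..<k} (\<lambda>_. lborel)) ((\<lambda>x. restrict (\<lambda>i. v + x i) {..<k}) -` Pi\<^sub>E {..<k} A \<inter> space (PiM {..<k} (\<lambda>_. lborel)))"
    using A by (intro emeasure_distr meas) (auto intro!: sets_PiM_I_finite)
  also have "(\<lambda>x. restrict (\<lambda>i. v + x i) {..<k}) -` Pi\<^sub>E {..<k} A \<inter> space (PiM {..<k} (\<lambda>_. lborel)) = Pi\<^sub>E {..<k} (\<lambda>i. (+) v -` A i)"
    by (auto simp: space_PiM PiE_def Pi_def extensional_def)
  also have "emeasure (PiM {..<k} (\<lambda>_. lborel)) (Pi\<^sub>E {..<k} (\<lambda>i. (+) v -` A i)) = (\<Prod>i<k. emeasure lborel ((+) v -` A i))"
    using A by (intro product_sigma_finite.emeasure_PiM[OF psf_lborel]) (auto intro!: pre)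
  also have "\<dots> = (\<Prod>i<k. emeasure lborel (A i))"
  proof (intro prod.cong refl)
    fix i assume "i \<in> {..<k}"
    hence "A i \<in> sets borel" using A by simp
    hence "emeasure (distr lborel borel ((+) v)) (A i) = emeasure lborel ((+) v -` A i \<inter> space lborel)"
      by (intro emeasure_distr) auto
    thus "emeasure lborel ((+) v -` A i) = emeasure lborel (A i)"
      by (simp add: lborel_distr_plus)
  qed
  finally show "emeasure (distr (PiM {..<k} (\<lambda>_. lborel)) (PiM {..<k} (\<lambda>_. lborel)) (\<lambda>x. restrict (\<lambda>i. v + x i) {..<k})) (Pi\<^sub>E {..<k} A) = (\<Prod>i\<in>{..<k}. emeasure lborel (A i))" by (simp add: restrict_def)
qed simp_all

lemma ham_meas[measurable]:
  assumes [measurable]: "\<phi> \<in> borel_measurable borel"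
  shows "(\<lambda>x. ham \<phi> k x) \<in> borel_measurable (PiM {..<k} (\<lambda>_. (lborel::'a::euclidean_space measure)))"
  unfolding ham_def by measurable

lemma prod_meas[measurable]:
  fixes f :: "'a::euclidean_space \<Rightarrow> real"
  assumes [measurable]: "f \<in> borel_measurable borel"
  shows "(\<lambda>x. \<Prod>i<k. f (x i)) \<in> borel_measurable (PiM {..<k} (\<lambda>_. (lborel::'a::euclidean_space measure)))"
  by (intro borel_measurable_prod) (auto intro: measurable_compose[OF measurable_component_singleton])


definition gterm :: "('a::euclidean_space \<Rightarrow> real) \<Rightarrow> ('a \<Rightarrow> real) \<Rightarrow> (nat \<Rightarrow> (nat \<Rightarrow> 'a) \<Rightarrow> real) \<Rightarrow> nat \<Rightarrow> ennreal" where
 "gterm \<phi> f g n = (\<integral>\<^sup>+ x. ennreal ((\<Prod>i<Suc n. f (x i)) * exp (- ham \<phi> (Suc n) x) * g (Suc n) x) \<partial>(PiM {..<Suc n} (\<lambda>_. lborel)))"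

lemma gsum_gterm: "gsum \<phi> f g = ennreal (g 0 (\<lambda>_. undefined)) + (\<Sum>n. ennreal (1 / fact (Suc n)) * gterm \<phi> f g n)"
  by (simp add: gsum_def gterm_def)

lemma ham_nonneg: assumes "\<And>x. 0 \<le> \<phi> x" shows "0 \<le> ham \<phi> k x"
  unfolding ham_def by (intro sum_nonneg) (simp add: assms)

lemma gsum_mono:
  assumes "g1 0 (\<lambda>_. undefined) \<le> g2 0 (\<lambda>_. undefined)"
    and "\<And>n. AE x in PiM {..<Suc n} (\<lambda>_. lborel). g1 (Suc n) x \<le> g2 (Suc n) x"
    and "\<And>x. 0 \<le> f x"
  shows "gsum \<phi> f g1 \<le> gsum \<phi> f g2"
  unfolding gsum_gterm
proof (intro add_mono suminf_le mult_left_mono)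
  show "ennreal (g1 0 (\<lambda>_. undefined)) \<le> ennreal (g2 0 (\<lambda>_. undefined))"
    using assms(1) by (rule ennreal_leI)
  fix n
  have "0 \<le> (\<Prod>i<Suc n. f (x i)) * exp (- ham \<phi> (Suc n) x)" for x
    using assms(3) by (simp add: prod_nonneg)
  then show "gterm \<phi> f g1 n \<le> gterm \<phi> f g2 n"
    unfolding gterm_def
    by (intro nn_integral_mono_AE, use assms(2)[of n] in eventually_elim)
       (auto intro!: ennreal_leI mult_left_mono)
qed auto

lemma gsum_add:
  fixes \<phi> f :: "'a::euclidean_space \<Rightarrow> real"
  assumes [measurable]: "\<phi> \<in> borel_measurable borel" "f \<in> borel_measurable borel"
    and [measurable]: "\<And>k. g1 k \<in> borel_measurable (PiM {..<k} (\<lambda>_. (lborel::'a measure)))"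
    and [measurable]: "\<And>k. g2 k \<in> borel_measurable (PiM {..<k} (\<lambda>_. (lborel::'a measure)))"
    and f0: "\<And>x. 0 \<le> f x" and g10: "\<And>k x. 0 \<le> g1 k x" and g20: "\<And>k x. 0 \<le> g2 k x"
  shows "gsum \<phi> f (\<lambda>k x. g1 k x + g2 k x) = gsum \<phi> f g1 + gsum \<phi> f g2"
proof -
  have w0: "0 \<le> (\<Prod>i<Suc n. f (x i)) * exp (- ham \<phi> (Suc n) x)" for n x
    using f0 by (simp add: prod_nonneg)
  have t: "gterm \<phi> f (\<lambda>k x. g1 k x + g2 k x) n = gterm \<phi> f g1 n + gterm \<phi> f g2 n" for n
    unfolding gterm_def
    apply (subst nn_integral_add[symmetric])
      apply measurable
    apply (intro nn_integral_cong)
    apply (subst ennreal_plus[symmetric])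
    using w0 g10 g20 by (auto simp: distrib_left intro!: mult_nonneg_nonneg)
  show ?thesis unfolding gsum_gterm t
    using g10 g20 by (simp add: distrib_left suminf_add[symmetric] ennreal_plus add_ac)
qed

lemma gsum_cmult:
  fixes \<phi> f :: "'a::euclidean_space \<Rightarrow> real"
  assumes [measurable]: "\<phi> \<in> borel_measurable borel" "f \<in> borel_measurable borel"
    and [measurable]: "\<And>k. g k \<in> borel_measurable (PiM {..<k} (\<lambda>_. (lborel::'a measure)))"
    and f0: "\<And>x. 0 \<le> f x" and g0: "\<And>k x. 0 \<le> g k x" and c0: "0 \<le> c"
  shows "gsum \<phi> f (\<lambda>k x. c * g k x) = ennreal c * gsum \<phi> f g"
proof -
  have w0: "0 \<le> (\<Prod>i<Suc n. f (x i)) * exp (- ham \<phi> (Suc n) x)" for n x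
    using f0 by (simp add: prod_nonneg)
  have t: "gterm \<phi> f (\<lambda>k x. c * g k x) n = ennreal c * gterm \<phi> f g n" for n
    unfolding gterm_def
    apply (subst nn_integral_cmult[symmetric])
      apply measurable
    apply (intro nn_integral_cong)
    apply (subst ennreal_mult[symmetric])
    using w0 g0 c0 f0 by (auto simp: ac_simps intro!: mult_nonneg_nonneg prod_nonneg)
  show ?thesis unfolding gsum_gterm t
    using g0 c0 by (simp add: distrib_left ennreal_mult ac_simps)
qed

lemma gsum_zero: "gsum \<phi> f (\<lambda>k x. 0) = 0"
  by (simp add: gsum_def)

lemma gsum_sum:
  fixes \<phi> f :: "'a::euclidean_space \<Rightarrow> real"
  assumes [measurable]: "\<phi> \<in> borel_measurable borel" "f \<in> borel_measurable borel"
    and [measurable]: "\<And>j k. g j k \<in> borel_measurable (PiM {..<k} (\<lambda>_. (lborel::'a measure)))"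
    and f0: "\<And>x. 0 \<le> f x" and g0: "\<And>j k x. 0 \<le> g j k x" and "finite J"
  shows "gsum \<phi> f (\<lambda>k x. \<Sum>j\<in>J. g j k x) = (\<Sum>j\<in>J. gsum \<phi> f (g j))"
  using \<open>finite J\<close>
proof (induction J rule: finite_induct)
  case empty
  then show ?case by (simp add: gsum_zero)
next
  case (insert j J)
  have "gsum \<phi> f (\<lambda>k x. \<Sum>j\<in>insert j J. g j k x) = gsum \<phi> f (\<lambda>k x. g j k x + (\<Sum>j\<in>J. g j k x))"
    using insert by simp
  also have "\<dots> = gsum \<phi> f (g j) + gsum \<phi> f (\<lambda>k x. \<Sum>j\<in>J. g j k x)"
    by (rule gsum_add) (auto intro!: sum_nonneg g0 f0)
  finally show ?case using insert by simp
qed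


lemma ham_transl: "ham \<phi> k (restrict (\<lambda>i. v + x i) {..<k}) = ham \<phi> k x"
  unfolding ham_def by (intro sum.cong refl) auto

lemma gsum_transl:
  fixes \<phi> f :: "'a::euclidean_space \<Rightarrow> real" and v :: 'a
  assumes [measurable]: "\<phi> \<in> borel_measurable borel" "f \<in> borel_measurable borel"
    and [measurable]: "\<And>k. g k \<in> borel_measurable (PiM {..<k} (\<lambda>_. (lborel::'a measure)))"
  shows "gsum \<phi> f g = gsum \<phi> (\<lambda>y. f (v + y)) (\<lambda>k x. g k (restrict (\<lambda>i. v + x i) {..<k}))"
proof -
  have t: "gterm \<phi> f g n = gterm \<phi> (\<lambda>y. f (v + y)) (\<lambda>k x. g k (restrict (\<lambda>i. v + x i) {..<k})) n" for n
  proof -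
    let ?T = "\<lambda>x. restrict (\<lambda>i. v + x i) {..<Suc n}"
    let ?F = "\<lambda>x. ennreal ((\<Prod>i<Suc n. f (x i)) * exp (- ham \<phi> (Suc n) x) * g (Suc n) x)"
    have "gterm \<phi> f g n = integral\<^sup>N (distr (PiM {..<Suc n} (\<lambda>_. lborel)) (PiM {..<Suc n} (\<lambda>_. lborel)) ?T) ?F"
      unfolding gterm_def distr_PiM_transl ..
    also have "\<dots> = (\<integral>\<^sup>+ x. ?F (?T x) \<partial>(PiM {..<Suc n} (\<lambda>_. lborel)))"
      by (intro nn_integral_distr) measurable
    also have "\<dots> = gterm \<phi> (\<lambda>y. f (v + y)) (\<lambda>k x. g k (restrict (\<lambda>i. v + x i) {..<k})) n"
      unfolding gterm_def ham_transl by (intro nn_integral_cong) simp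
    finally show ?thesis .
  qed
  have "restrict (\<lambda>i. v + (\<lambda>_. undefined) i) {} = (\<lambda>_. undefined)" by (simp add: restrict_def fun_eq_iff)
  then show ?thesis unfolding gsum_gterm t by (simp add: restrict_def)
qed

lemma nn_integral_indicator_PiE:
  fixes C :: "'a::euclidean_space set"
  assumes "C \<in> sets borel"
  shows "(\<integral>\<^sup>+ x. indicator (PiE {..<m} (\<lambda>_. C)) x \<partial>(PiM {..<m} (\<lambda>_. lborel))) = emeasure lborel C ^ m"
proof -
  have "PiE {..<m} (\<lambda>_. C) \<in> sets (PiM {..<m} (\<lambda>_. (lborel::'a measure)))"
    using assms by (intro sets_PiM_I_finite) auto
  hence "(\<integral>\<^sup>+ x. indicator (PiE {..<m} (\<lambda>_. C)) x \<partial>(PiM {..<m} (\<lambda>_. lborel))) = emeasure (PiM {..<m} (\<lambda>_. lborel)) (PiE {..<m} (\<lambda>_. C))"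
    by simp
  also have "\<dots> = (\<Prod>i<m. emeasure lborel C)"
    using assms by (intro product_sigma_finite.emeasure_PiM[OF psf_lborel]) auto
  finally show ?thesis by simp
qed

lemma prod_indicator_PiE:
  fixes m :: nat
  assumes "x \<in> space (PiM {..<m} M)"
  shows "(\<Prod>i<m. indicator C (x i) :: real) = indicator (PiE {..<m} (\<lambda>_. C)) x"
proof (cases "\<forall>i<m. x i \<in> C")
  case True
  then have "(\<Prod>i<m. indicator C (x i) :: real) = (\<Prod>i<m. 1)" by (intro prod.cong) auto
  with True assms show ?thesis by (auto simp: space_PiM PiE_def indicator_def extensional_def)
next
  case False
  then obtain i where "i < m" "x i \<notin> C" by auto
  then have "(\<Prod>i<m. indicator C (x i) :: real) = 0" by (intro prod_zero) (auto intro!: bexI[of _ i])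
  with False show ?thesis by (auto simp: PiE_def indicator_def)
qed

lemma activity_le_bound:
  fixes f :: "'a::euclidean_space \<Rightarrow> real"
  assumes "activity_le lam f"
  obtains R where "R > 0" "\<And>x. f x \<le> lam * indicator (cball (0::'a) R) x"
proof -
  from assms have "bounded {x. f x \<noteq> 0}" by (simp add: activity_le_def)
  then obtain R where R: "R > 0" "\<And>x. f x \<noteq> 0 \<Longrightarrow> norm x \<le> R"
    unfolding bounded_pos by auto
  have "f x \<le> lam * indicator (cball (0::'a) R) x" for x
    using R(2)[of x] assms by (cases "f x = 0") (auto simp: activity_le_def indicator_def)
  with R(1) show ?thesis by (intro that) auto
qed

lemma Zact_finite:
  fixes f \<phi> :: "'a::euclidean_space \<Rightarrow> real"
  assumes "activity_le lam f" and phi0: "\<And>x. 0 \<le> \<phi> x"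
  shows "Zact \<phi> f < top"
proof -
  obtain R where R: "R > 0" "\<And>x. f x \<le> lam * indicator (cball (0::'a) R) x"
    using activity_le_bound[OF assms(1)] by blast
  have f0: "\<And>x. 0 \<le> f x" and lam0: "0 \<le> lam" using assms(1) by (auto simp: activity_le_def)
  define m where "m = measure lborel (cball (0::'a) R)"
  have em: "emeasure lborel (cball (0::'a) R) = ennreal m"
    unfolding m_def using emeasure_bounded_finite[of "cball (0::'a) R"]
    by (intro emeasure_eq_ennreal_measure) auto
  have m0: "0 \<le> m" unfolding m_def by simp
  have gt: "gterm \<phi> f (\<lambda>k x. 1) n \<le> ennreal ((lam * m) ^ Suc n)" for n
  proof -
    have "gterm \<phi> f (\<lambda>k x. 1) n \<le> (\<integral>\<^sup>+ x. ennreal (lam ^ Suc n) * indicator (PiE {..<Suc n} (\<lambda>_. cball (0::'a) R)) x \<partial>(PiM {..<Suc n} (\<lambda>_. lborel)))"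
      unfolding gterm_def
    proof (rule nn_integral_mono)
      fix x assume x: "x \<in> space (PiM {..<Suc n} (\<lambda>_. (lborel::'a measure)))"
      have "(\<Prod>i<Suc n. f (x i)) \<le> (\<Prod>i<Suc n. lam * indicator (cball (0::'a) R) (x i))"
        using R f0 by (intro prod_mono) auto
      also have "\<dots> = lam ^ Suc n * indicator (PiE {..<Suc n} (\<lambda>_. cball (0::'a) R)) x"
        using prod_indicator_PiE[OF x] by (simp add: prod.distrib)
      finally have a: "(\<Prod>i<Suc n. f (x i)) \<le> lam ^ Suc n * indicator (PiE {..<Suc n} (\<lambda>_. cball (0::'a) R)) x" .
      have "exp (- ham \<phi> (Suc n) x) \<le> 1" using ham_nonneg[OF phi0] by simp
      hence "(\<Prod>i<Suc n. f (x i)) * exp (- ham \<phi> (Suc n) x) * 1 \<le> (\<Prod>i<Suc n. f (x i))"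
        using f0 by (simp add: mult_left_le prod_nonneg)
      with a have b: "(\<Prod>i<Suc n. f (x i)) * exp (- ham \<phi> (Suc n) x) * 1
          \<le> lam ^ Suc n * indicator (PiE {..<Suc n} (\<lambda>_. cball (0::'a) R)) x" by linarith
      show "ennreal ((\<Prod>i<Suc n. f (x i)) * exp (- ham \<phi> (Suc n) x) * 1)
          \<le> ennreal (lam ^ Suc n) * indicator (PiE {..<Suc n} (\<lambda>_. cball (0::'a) R)) x"
        using ennreal_leI[OF b] lam0 by (simp add: ennreal_mult ennreal_indicator)
    qed
    also have "\<dots> = ennreal (lam ^ Suc n) * (\<integral>\<^sup>+ x. indicator (PiE {..<Suc n} (\<lambda>_. cball (0::'a) R)) x \<partial>(PiM {..<Suc n} (\<lambda>_. lborel)))"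
      by (rule nn_integral_cmult) simp
    also have "\<dots> = ennreal (lam ^ Suc n) * emeasure lborel (cball (0::'a) R) ^ Suc n"
      by (subst nn_integral_indicator_PiE) auto
    also have "\<dots> = ennreal (lam ^ Suc n) * ennreal (m ^ Suc n)"
      by (simp only: em ennreal_power[OF m0])
    also have "\<dots> = ennreal ((lam * m) ^ Suc n)"
      unfolding power_mult_distrib by (rule ennreal_mult[symmetric]; intro zero_le_power lam0 m0)
    finally show ?thesis .
  qed
  have eq: "(\<lambda>n. inverse (fact n) * (lam*m)^n) = (\<lambda>n. (lam*m)^n / fact n)"
    by (rule ext) (simp only: divide_inverse_commute)
  have sm: "summable (\<lambda>n. (lam * m) ^ Suc n / fact (Suc n))"
    using summable_Suc_iff[THEN iffD2, OF summable_exp[of "lam * m", unfolded eq]] .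
  have "(\<Sum>n. ennreal (1 / fact (Suc n)) * gterm \<phi> f (\<lambda>k x. 1) n) \<le> (\<Sum>n. ennreal ((lam * m) ^ Suc n / fact (Suc n)))"
  proof (intro suminf_le)
    fix n
    have "ennreal (1 / fact (Suc n)) * gterm \<phi> f (\<lambda>k x. 1) n \<le> ennreal (1 / fact (Suc n)) * ennreal ((lam * m) ^ Suc n)"
      by (intro mult_left_mono gt) simp
    also have "\<dots> = ennreal ((lam * m) ^ Suc n / fact (Suc n))"
      using lam0 m0 by (subst ennreal_mult[symmetric]) auto
    finally show "ennreal (1 / fact (Suc n)) * gterm \<phi> f (\<lambda>k x. 1) n \<le> ennreal ((lam * m) ^ Suc n / fact (Suc n))" .
  qed auto
  also have "\<dots> < top"
  proof -
    have "(\<Sum>n. ennreal ((lam * m) ^ Suc n / fact (Suc n))) \<noteq> top"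
      by (rule ennreal_suminf_neq_top[OF sm]) (intro divide_nonneg_nonneg zero_le_power mult_nonneg_nonneg lam0 m0 fact_ge_zero)
    then show ?thesis by (simp only: top.not_eq_extremum)
  qed
  finally have "(\<Sum>n. ennreal (1 / fact (Suc n)) * gterm \<phi> f (\<lambda>k x. 1) n) < top" .
  then show ?thesis unfolding Zact_def gsum_gterm ennreal_add_less_top by (simp only: ennreal_less_top simp_thms)
qed


lemma sfm_PiM: "sigma_finite_measure (PiM {..<k} (\<lambda>_::nat. (lborel::'a::euclidean_space measure)))"
proof -
  interpret finite_product_sigma_finite "\<lambda>_::nat. (lborel::'a measure)" "{..<k}"
    by (simp add: finite_product_sigma_finite_def psf_lborel finite_product_sigma_finite_axioms_def)
  show ?thesis by (rule sigma_finite_measure_axioms)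
qed

definition Ib :: "('a::euclidean_space \<Rightarrow> real) \<Rightarrow> 'a set \<Rightarrow> nat \<Rightarrow> real" where
  "Ib \<phi> \<Lambda> m = enn2real (\<integral>\<^sup>+ x. indicator (PiE {..<m} (\<lambda>_. \<Lambda>)) x * ennreal (exp (- ham \<phi> m x)) \<partial>(PiM {..<m} (\<lambda>_. lborel)))"

definition ac :: "('a::euclidean_space \<Rightarrow> real) \<Rightarrow> 'a set \<Rightarrow> nat \<Rightarrow> real" where
  "ac \<phi> \<Lambda> m = (if m = 0 then 1 else Ib \<phi> \<Lambda> m / fact m)"

definition Zr :: "('a::euclidean_space \<Rightarrow> real) \<Rightarrow> 'a set \<Rightarrow> real \<Rightarrow> real" where
  "Zr \<phi> \<Lambda> s = (\<Sum>m. ac \<phi> \<Lambda> m * s ^ m)"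

definition Zd :: "('a::euclidean_space \<Rightarrow> real) \<Rightarrow> 'a set \<Rightarrow> real \<Rightarrow> real" where
  "Zd \<phi> \<Lambda> s = (\<Sum>m. diffs (ac \<phi> \<Lambda>) m * s ^ m)"

locale boxctx =
  fixes \<phi> :: "'a::euclidean_space \<Rightarrow> real" and \<Lambda> :: "'a set"
  assumes phi_meas[measurable]: "\<phi> \<in> borel_measurable borel"
    and phi0: "\<And>x. 0 \<le> \<phi> x"
    and Lam_meas[measurable]: "\<Lambda> \<in> sets borel"
    and Lam_bdd: "bounded \<Lambda>"
begin

definition "mu = measure lborel \<Lambda>"

lemma em_Lam: "emeasure lborel \<Lambda> = ennreal mu"
  unfolding mu_def using emeasure_bounded_finite[OF Lam_bdd]
  by (intro emeasure_eq_ennreal_measure) (simp add: top.not_eq_extremum)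

lemma mu0: "0 \<le> mu" unfolding mu_def by simp

lemma Ib_int_le: "(\<integral>\<^sup>+ x. indicator (PiE {..<m} (\<lambda>_. \<Lambda>)) x * ennreal (exp (- ham \<phi> m x)) \<partial>(PiM {..<m} (\<lambda>_. lborel)))
    \<le> ennreal (mu ^ m)"
proof -
  have "(\<integral>\<^sup>+ x. indicator (PiE {..<m} (\<lambda>_. \<Lambda>)) x * ennreal (exp (- ham \<phi> m x)) \<partial>(PiM {..<m} (\<lambda>_. lborel)))
     \<le> (\<integral>\<^sup>+ x. indicator (PiE {..<m} (\<lambda>_. \<Lambda>)) x \<partial>(PiM {..<m} (\<lambda>_. lborel)))"
  proof (rule nn_integral_mono)
    fix x
    have "exp (- ham \<phi> m x) \<le> 1" using ham_nonneg[OF phi0] by simp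
    hence "ennreal (exp (- ham \<phi> m x)) \<le> 1" by (simp add: ennreal_leI[of _ 1, simplified])
    then show "indicator (PiE {..<m} (\<lambda>_. \<Lambda>)) x * ennreal (exp (- ham \<phi> m x)) \<le> (indicator (PiE {..<m} (\<lambda>_. \<Lambda>)) x :: ennreal)"
      by (simp add: indicator_def)
  qed
  also have "\<dots> = emeasure lborel \<Lambda> ^ m" by (rule nn_integral_indicator_PiE) simp
  also have "\<dots> = ennreal (mu ^ m)" by (simp only: em_Lam ennreal_power[OF mu0])
  finally show ?thesis .
qed

lemma Ib_int_eq: "(\<integral>\<^sup>+ x. indicator (PiE {..<m} (\<lambda>_. \<Lambda>)) x * ennreal (exp (- ham \<phi> m x)) \<partial>(PiM {..<m} (\<lambda>_. lborel)))
    = ennreal (Ib \<phi> \<Lambda> m)"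
proof -
  have "(\<integral>\<^sup>+ x. indicator (PiE {..<m} (\<lambda>_. \<Lambda>)) x * ennreal (exp (- ham \<phi> m x)) \<partial>(PiM {..<m} (\<lambda>_. lborel))) < top"
    using Ib_int_le[of m] by (rule le_less_trans) simp
  then show ?thesis unfolding Ib_def by (simp only: ennreal_enn2real_if) (simp add: top.not_eq_extremum)
qed

lemma Ib_bounds: "0 \<le> Ib \<phi> \<Lambda> m" "Ib \<phi> \<Lambda> m \<le> mu ^ m"
proof -
  show "0 \<le> Ib \<phi> \<Lambda> m" unfolding Ib_def by simp
  have "ennreal (Ib \<phi> \<Lambda> m) \<le> ennreal (mu ^ m)" using Ib_int_le[of m] unfolding Ib_int_eq .
  then show "Ib \<phi> \<Lambda> m \<le> mu ^ m" using mu0 by (simp add: ennreal_le_iff)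
qed

lemma ac_nonneg: "0 \<le> ac \<phi> \<Lambda> m" unfolding ac_def using Ib_bounds by simp

lemma ac_le: "ac \<phi> \<Lambda> m \<le> mu ^ m / fact m"
  unfolding ac_def using Ib_bounds[of m] by (simp add: divide_right_mono)

lemma ac_summable: "summable (\<lambda>m. ac \<phi> \<Lambda> m * y ^ m)"
proof (rule summable_comparison_test')
  have eq: "(\<lambda>n. inverse (fact n) * (mu * norm y)^n) = (\<lambda>n. (mu * norm y)^n / fact n)"
    by (rule ext) (simp only: divide_inverse_commute)
  show "summable (\<lambda>n. (mu * norm y)^n / fact n)" using summable_exp[of "mu * norm y", unfolded eq] .
  fix n
  have "norm (ac \<phi> \<Lambda> n * y ^ n) = ac \<phi> \<Lambda> n * norm y ^ n"
    using ac_nonneg[of n] by (simp add: abs_mult power_abs)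
  also have "\<dots> \<le> mu ^ n / fact n * norm y ^ n"
    by (intro mult_right_mono ac_le) simp
  also have "\<dots> = (mu * norm y)^n / fact n" by (simp add: power_mult_distrib)
  finally show "norm (ac \<phi> \<Lambda> n * y ^ n) \<le> (mu * norm y)^n / fact n" .
qed

lemma Zr_deriv: "(Zr \<phi> \<Lambda> has_field_derivative Zd \<phi> \<Lambda> s) (at s)"
  unfolding Zr_def[abs_def] Zd_def
  by (rule termdiffs_strong_converges_everywhere) (rule ac_summable)

lemma Zd_summable: "summable (\<lambda>m. diffs (ac \<phi> \<Lambda>) m * y ^ m)"
  by (rule termdiff_converges_all) (rule ac_summable)

lemma Zd_deriv: "(Zd \<phi> \<Lambda> has_field_derivative (\<Sum>m. diffs (diffs (ac \<phi> \<Lambda>)) m * s ^ m)) (at s)"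
  unfolding Zd_def[abs_def]
  by (rule termdiffs_strong_converges_everywhere) (rule Zd_summable)

lemma Zd_cont: "continuous_on A (Zd \<phi> \<Lambda>)"
  using Zd_deriv by (meson DERIV_isCont continuous_at_imp_continuous_on)

lemma Zr_cont: "continuous_on A (Zr \<phi> \<Lambda>)"
  using Zr_deriv by (meson DERIV_isCont continuous_at_imp_continuous_on)

lemma Zr_ge1: assumes "0 \<le> s" shows "1 \<le> Zr \<phi> \<Lambda> s"
proof -
  have "(\<Sum>m<1. ac \<phi> \<Lambda> m * s ^ m) \<le> Zr \<phi> \<Lambda> s"
    unfolding Zr_def using ac_summable
    by (rule sum_le_suminf) (use assms ac_nonneg in auto)
  then show ?thesis by (simp add: ac_def)
qed

lemma Zd_nonneg: assumes "0 \<le> s" shows "0 \<le> Zd \<phi> \<Lambda> s"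
  unfolding Zd_def using assms ac_nonneg
  by (intro suminf_nonneg Zd_summable) (simp add: diffs_def)

end


context boxctx begin

lemma Gint:
  assumes s0: "0 \<le> s"
  shows "(\<integral>\<^sup>+ y. ennreal ((\<Prod>i<m. s * indicator \<Lambda> (y i)) * exp (- ham \<phi> m y)) \<partial>(PiM {..<m} (\<lambda>_. lborel)))
     = ennreal (s ^ m * Ib \<phi> \<Lambda> m)"
proof -
  have "(\<integral>\<^sup>+ y. ennreal ((\<Prod>i<m. s * indicator \<Lambda> (y i)) * exp (- ham \<phi> m y)) \<partial>(PiM {..<m} (\<lambda>_. lborel)))
     = (\<integral>\<^sup>+ y. ennreal (s ^ m) * (indicator (PiE {..<m} (\<lambda>_. \<Lambda>)) y * ennreal (exp (- ham \<phi> m y))) \<partial>(PiM {..<m} (\<lambda>_. lborel)))"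
  proof (rule nn_integral_cong)
    fix y assume y: "y \<in> space (PiM {..<m} (\<lambda>_. (lborel::'a measure)))"
    have "(\<Prod>i<m. s * indicator \<Lambda> (y i)) = s ^ m * indicator (PiE {..<m} (\<lambda>_. \<Lambda>)) y"
      using prod_indicator_PiE[OF y] by (simp add: prod.distrib)
    then show "ennreal ((\<Prod>i<m. s * indicator \<Lambda> (y i)) * exp (- ham \<phi> m y))
      = ennreal (s ^ m) * (indicator (PiE {..<m} (\<lambda>_. \<Lambda>)) y * ennreal (exp (- ham \<phi> m y)))"
      using s0 by (simp add: ennreal_mult ennreal_indicator mult.assoc)
  qed
  also have "\<dots> = ennreal (s ^ m) * (\<integral>\<^sup>+ y. indicator (PiE {..<m} (\<lambda>_. \<Lambda>)) y * ennreal (exp (- ham \<phi> m y)) \<partial>(PiM {..<m} (\<lambda>_. lborel)))"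
    by (rule nn_integral_cmult) measurable
  also have "\<dots> = ennreal (s ^ m * Ib \<phi> \<Lambda> m)"
    unfolding Ib_int_eq using s0 Ib_bounds by (simp add: ennreal_mult)
  finally show ?thesis .
qed

lemma series_eq:
  assumes s0: "0 \<le> s"
  shows "1 + (\<Sum>n. ennreal (ac \<phi> \<Lambda> (Suc n) * s ^ Suc n)) = ennreal (Zr \<phi> \<Lambda> s)"
proof -
  have sm: "summable (\<lambda>n. ac \<phi> \<Lambda> (Suc n) * s ^ Suc n)"
    using ac_summable[of s] by (subst summable_Suc_iff)
  have "(\<Sum>n. ennreal (ac \<phi> \<Lambda> (Suc n) * s ^ Suc n)) = ennreal (\<Sum>n. ac \<phi> \<Lambda> (Suc n) * s ^ Suc n)"
    using sm s0 ac_nonneg by (intro suminf_ennreal2) auto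
  also have "(\<Sum>n. ac \<phi> \<Lambda> (Suc n) * s ^ Suc n) = Zr \<phi> \<Lambda> s - 1"
    unfolding Zr_def using suminf_split_head[OF ac_summable[of s]] by (simp add: ac_def)
  finally have "1 + (\<Sum>n. ennreal (ac \<phi> \<Lambda> (Suc n) * s ^ Suc n)) = ennreal 1 + ennreal (Zr \<phi> \<Lambda> s - 1)" by simp
  also have "\<dots> = ennreal (Zr \<phi> \<Lambda> s)"
    using Zr_ge1[OF s0] by (subst ennreal_plus[symmetric]) auto
  finally show ?thesis .
qed

lemma Zact_box:
  assumes s0: "0 \<le> s"
  shows "Zact \<phi> (\<lambda>x. s * indicator \<Lambda> x) = ennreal (Zr \<phi> \<Lambda> s)"
proof -
  have t: "ennreal (1 / fact (Suc n)) * gterm \<phi> (\<lambda>x. s * indicator \<Lambda> x) (\<lambda>k x. 1) n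
      = ennreal (ac \<phi> \<Lambda> (Suc n) * s ^ Suc n)" for n
  proof -
    have "gterm \<phi> (\<lambda>x. s * indicator \<Lambda> x) (\<lambda>k x. 1) n = ennreal (s ^ Suc n * Ib \<phi> \<Lambda> (Suc n))"
      unfolding gterm_def using Gint[OF s0, of "Suc n"] by simp
    then show ?thesis
      using s0 Ib_bounds[of "Suc n"] by (simp add: ennreal_mult[symmetric] ac_def del: fact_Suc)
  qed
  show ?thesis unfolding Zact_def gsum_gterm t using series_eq[OF s0] by simp
qed

lemma Zbox_eq:
  assumes s0: "0 \<le> s"
  shows "Zbox \<phi> \<Lambda> s = ennreal (Zr \<phi> \<Lambda> s)"
proof -
  have t: "ennreal (s ^ Suc n / fact (Suc n)) * (\<integral>\<^sup>+ x. indicator (PiE {..<Suc n} (\<lambda>_. \<Lambda>)) x * ennreal (exp (- ham \<phi> (Suc n) x)) \<partial>(PiM {..<Suc n} (\<lambda>_. lborel)))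
      = ennreal (ac \<phi> \<Lambda> (Suc n) * s ^ Suc n)" for n
    unfolding Ib_int_eq using s0 Ib_bounds[of "Suc n"] by (simp add: ennreal_mult[symmetric] ac_def del: fact_Suc)
  show ?thesis unfolding Zbox_def t using series_eq[OF s0] by simp
qed

end


definition Fv :: "('a::euclidean_space \<Rightarrow> real) \<Rightarrow> 'a \<Rightarrow> nat \<Rightarrow> (nat \<Rightarrow> 'a) \<Rightarrow> real" where
  "Fv \<phi> v k x = exp (- (\<Sum>i<k. \<phi> (v - x i)))"

lemma rho_fin_alt: "rho_fin \<phi> f v = f v * (enn2real (gsum \<phi> f (Fv \<phi> v)) / enn2real (Zact \<phi> f))"
  unfolding rho_fin_def Fv_def[abs_def] ..

lemma Fv_meas[measurable]:
  fixes \<phi> :: "'a::euclidean_space \<Rightarrow> real"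
  assumes [measurable]: "\<phi> \<in> borel_measurable borel"
  shows "Fv \<phi> v k \<in> borel_measurable (PiM {..<k} (\<lambda>_. (lborel::'a measure)))"
  unfolding Fv_def[abs_def] by measurable

lemma Fv_bounds: assumes "\<And>x. 0 \<le> \<phi> x" shows "0 \<le> Fv \<phi> v k x" "Fv \<phi> v k x \<le> 1"
  unfolding Fv_def using assms by (auto intro!: sum_nonneg)

lemma Fv_0: "Fv \<phi> v 0 x = 1" unfolding Fv_def by simp

context boxctx begin

lemma T_meas:
  "(\<lambda>v. gterm \<phi> (\<lambda>x. s * indicator \<Lambda> x) (Fv \<phi> v) n) \<in> borel_measurable borel"
proof -
  interpret sigma_finite_measure "PiM {..<Suc n} (\<lambda>_::nat. (lborel::'a measure))" by (rule sfm_PiM)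
  show ?thesis unfolding gterm_def Fv_def
    by (rule borel_measurable_nn_integral) measurable
qed


lemma Wv_meas:
  "(\<lambda>v. gsum \<phi> (\<lambda>x. s * indicator \<Lambda> x) (Fv \<phi> v)) \<in> borel_measurable borel"
  unfolding gsum_gterm Fv_0 using T_meas by measurable

lemma ham_upd:
  assumes sym: "\<And>x. \<phi> (- x) = \<phi> x"
  shows "ham \<phi> (Suc (Suc n)) (x(Suc n := v)) = ham \<phi> (Suc n) x + (\<Sum>i<Suc n. \<phi> (v - x i))"
proof -
  have "ham \<phi> (Suc (Suc n)) (x(Suc n := v)) = (\<Sum>j<Suc n. \<Sum>i<j. \<phi> ((x(Suc n := v)) i - (x(Suc n := v)) j)) + (\<Sum>i<Suc n. \<phi> ((x(Suc n := v)) i - v))"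
    unfolding ham_def by (simp add: sum.lessThan_Suc[of _ "Suc n"])
  also have "(\<Sum>j<Suc n. \<Sum>i<j. \<phi> ((x(Suc n := v)) i - (x(Suc n := v)) j)) = ham \<phi> (Suc n) x"
    unfolding ham_def by (intro sum.cong refl) auto
  also have "(\<Sum>i<Suc n. \<phi> ((x(Suc n := v)) i - v)) = (\<Sum>i<Suc n. \<phi> (v - x i))"
  proof (intro sum.cong refl)
    fix i assume "i \<in> {..<Suc n}"
    then have "(x(Suc n := v)) i = x i" by simp
    then show "\<phi> ((x(Suc n := v)) i - v) = \<phi> (v - x i)" using sym[of "v - x i"] by simp
  qed
  finally show ?thesis .
qed

lemma inner_eq:
  assumes sym: "\<And>x. \<phi> (- x) = \<phi> x" and s0: "0 \<le> s"
  shows "ennreal (s * indicator \<Lambda> v) * ennreal ((\<Prod>i<Suc n. s * indicator \<Lambda> (x i)) * exp (- ham \<phi> (Suc n) x) * Fv \<phi> v (Suc n) x)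
    = ennreal ((\<Prod>i<Suc (Suc n). s * indicator \<Lambda> ((x(Suc n := v)) i)) * exp (- ham \<phi> (Suc (Suc n)) (x(Suc n := v))))"
proof -
  have p: "(\<Prod>i<Suc (Suc n). s * indicator \<Lambda> ((x(Suc n := v)) i)) = (\<Prod>i<Suc n. s * indicator \<Lambda> (x i)) * (s * indicator \<Lambda> v)"
    by (simp add: prod.lessThan_Suc[of _ "Suc n"])
  have e: "exp (- ham \<phi> (Suc (Suc n)) (x(Suc n := v))) = exp (- ham \<phi> (Suc n) x) * Fv \<phi> v (Suc n) x"
    unfolding ham_upd[OF sym] Fv_def by (simp add: exp_add[symmetric])
  have nn: "0 \<le> s * indicator \<Lambda> v" "0 \<le> (\<Prod>i<Suc n. s * indicator \<Lambda> (x i)) * exp (- ham \<phi> (Suc n) x) * Fv \<phi> v (Suc n) x"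
    using s0 by (auto intro!: mult_nonneg_nonneg prod_nonneg Fv_bounds phi0)
  show ?thesis unfolding p e ennreal_mult[OF nn, symmetric] by (simp add: ac_simps)
qed

lemma term_int:
  assumes sym: "\<And>x. \<phi> (- x) = \<phi> x" and s0: "0 \<le> s"
  shows "(\<integral>\<^sup>+ v. ennreal (s * indicator \<Lambda> v) * gterm \<phi> (\<lambda>x. s * indicator \<Lambda> x) (Fv \<phi> v) n \<partial>lborel)
    = ennreal (s ^ Suc (Suc n) * Ib \<phi> \<Lambda> (Suc (Suc n)))"
proof -
  let ?G = "\<lambda>y. ennreal ((\<Prod>i<Suc (Suc n). s * indicator \<Lambda> (y i)) * exp (- ham \<phi> (Suc (Suc n)) y))"
  have A: "(\<integral>\<^sup>+ v. ennreal (s * indicator \<Lambda> v) * gterm \<phi> (\<lambda>x. s * indicator \<Lambda> x) (Fv \<phi> v) n \<partial>lborel)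
     = (\<integral>\<^sup>+ v. (\<integral>\<^sup>+ x. ?G (x(Suc n := v)) \<partial>(PiM {..<Suc n} (\<lambda>_. lborel))) \<partial>lborel)"
  proof (rule nn_integral_cong)
    fix v :: 'a
    have "ennreal (s * indicator \<Lambda> v) * gterm \<phi> (\<lambda>x. s * indicator \<Lambda> x) (Fv \<phi> v) n
      = (\<integral>\<^sup>+ x. ennreal (s * indicator \<Lambda> v) * ennreal ((\<Prod>i<Suc n. s * indicator \<Lambda> (x i)) * exp (- ham \<phi> (Suc n) x) * Fv \<phi> v (Suc n) x) \<partial>(PiM {..<Suc n} (\<lambda>_. lborel)))"
      unfolding gterm_def by (rule nn_integral_cmult[symmetric]) measurable
    also have "\<dots> = (\<integral>\<^sup>+ x. ?G (x(Suc n := v)) \<partial>(PiM {..<Suc n} (\<lambda>_. lborel)))"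
      unfolding inner_eq[OF sym s0] ..
    finally show "ennreal (s * indicator \<Lambda> v) * gterm \<phi> (\<lambda>x. s * indicator \<Lambda> x) (Fv \<phi> v) n
      = (\<integral>\<^sup>+ x. ?G (x(Suc n := v)) \<partial>(PiM {..<Suc n} (\<lambda>_. lborel)))" .
  qed
  have eqI: "insert (Suc n) {..<Suc n} = {..<Suc (Suc n)}" by auto
  have B: "(\<integral>\<^sup>+ y. ?G y \<partial>(PiM (insert (Suc n) {..<Suc n}) (\<lambda>_. lborel)))
     = (\<integral>\<^sup>+ v. (\<integral>\<^sup>+ x. ?G (x(Suc n := v)) \<partial>(PiM {..<Suc n} (\<lambda>_. lborel))) \<partial>lborel)"
  proof (rule product_sigma_finite.product_nn_integral_insert_rev[OF psf_lborel])
    show "?G \<in> borel_measurable (PiM (insert (Suc n) {..<Suc n}) (\<lambda>_. lborel))"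
      unfolding eqI by measurable
  qed auto
  have C: "(\<integral>\<^sup>+ y. ?G y \<partial>(PiM {..<Suc (Suc n)} (\<lambda>_. lborel))) = ennreal (s ^ Suc (Suc n) * Ib \<phi> \<Lambda> (Suc (Suc n)))"
    by (rule Gint[OF s0])
  show ?thesis using A B C unfolding eqI by simp
qed

lemma Ib1: "Ib \<phi> \<Lambda> 1 = mu"
proof -
  have h: "\<And>x. ham \<phi> 1 x = 0" by (simp add: ham_def)
  show ?thesis
    unfolding Ib_def h minus_zero exp_zero ennreal_1 mult_1_right nn_integral_indicator_PiE[OF Lam_meas]
      em_Lam power_one_right enn2real_ennreal[OF mu0] ..
qed

end


context boxctx begin

lemma key_int:
  assumes sym: "\<And>x. \<phi> (- x) = \<phi> x" and s0: "0 \<le> s"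
  shows "(\<integral>\<^sup>+ v. ennreal (s * indicator \<Lambda> v) * gsum \<phi> (\<lambda>x. s * indicator \<Lambda> x) (Fv \<phi> v) \<partial>lborel)
    = ennreal (s * Zd \<phi> \<Lambda> s)"
proof -
  let ?f = "\<lambda>x. s * indicator \<Lambda> x"
  let ?T = "\<lambda>n v. gterm \<phi> ?f (Fv \<phi> v) n"
  have d: "ennreal (s * indicator \<Lambda> v) * gsum \<phi> ?f (Fv \<phi> v)
      = ennreal (s * indicator \<Lambda> v) + (\<Sum>n. ennreal (1 / fact (Suc n)) * (ennreal (s * indicator \<Lambda> v) * ?T n v))" for v
    unfolding gsum_gterm Fv_0 ennreal_1 distrib_left mult_1_right ennreal_suminf_cmult[symmetric]
    by (simp only: ac_simps)
  have m1: "(\<lambda>v. ennreal (s * indicator \<Lambda> v)) \<in> borel_measurable lborel" by measurable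
  have m2: "(\<lambda>v. ennreal (1 / fact (Suc n)) * (ennreal (s * indicator \<Lambda> v) * ?T n v)) \<in> borel_measurable lborel" for n
    using T_meas[of s n] by measurable
  have "(\<integral>\<^sup>+ v. ennreal (s * indicator \<Lambda> v) * gsum \<phi> ?f (Fv \<phi> v) \<partial>lborel)
     = (\<integral>\<^sup>+ v. ennreal (s * indicator \<Lambda> v) \<partial>lborel) + (\<Sum>n. \<integral>\<^sup>+ v. ennreal (1 / fact (Suc n)) * (ennreal (s * indicator \<Lambda> v) * ?T n v) \<partial>lborel)"
    unfolding d
    by (subst nn_integral_add) (use m1 m2 in \<open>auto intro!: borel_measurable_suminf_order nn_integral_suminf\<close>)
  also have "(\<integral>\<^sup>+ v. ennreal (s * indicator \<Lambda> v) \<partial>lborel) = ennreal (s * mu)"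
  proof -
    have "(\<integral>\<^sup>+ v. ennreal (s * indicator \<Lambda> v) \<partial>lborel) = (\<integral>\<^sup>+ v. ennreal s * indicator \<Lambda> v \<partial>lborel)"
      using s0 by (intro nn_integral_cong) (simp add: ennreal_mult ennreal_indicator)
    also have "\<dots> = ennreal s * emeasure lborel \<Lambda>" by (rule nn_integral_cmult_indicator) simp
    finally show ?thesis using s0 mu0 by (simp add: em_Lam ennreal_mult)
  qed
  also have "(\<lambda>n. \<integral>\<^sup>+ v. ennreal (1 / fact (Suc n)) * (ennreal (s * indicator \<Lambda> v) * ?T n v) \<partial>lborel)
      = (\<lambda>n. ennreal (1 / fact (Suc n)) * ennreal (s ^ Suc (Suc n) * Ib \<phi> \<Lambda> (Suc (Suc n))))"
  proof (rule ext)
    fix n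
    show "(\<integral>\<^sup>+ v. ennreal (1 / fact (Suc n)) * (ennreal (s * indicator \<Lambda> v) * ?T n v) \<partial>lborel)
      = ennreal (1 / fact (Suc n)) * ennreal (s ^ Suc (Suc n) * Ib \<phi> \<Lambda> (Suc (Suc n)))"
      by (subst nn_integral_cmult) (use T_meas[of s n] term_int[OF sym s0, of n] in \<open>simp_all\<close>)
  qed
  also have "ennreal (s * mu) + (\<Sum>n. ennreal (1 / fact (Suc n)) * ennreal (s ^ Suc (Suc n) * Ib \<phi> \<Lambda> (Suc (Suc n))))
      = ennreal (s * Zd \<phi> \<Lambda> s)"
  proof -
    define t where "t m = s * (diffs (ac \<phi> \<Lambda>) m * s ^ m)" for m
    have tsum: "summable t" unfolding t_def by (intro summable_mult Zd_summable)
    have t0: "t 0 = s * mu" unfolding t_def diffs_def ac_def using Ib1 by simp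
    have tS: "ennreal (1 / fact (Suc n)) * ennreal (s ^ Suc (Suc n) * Ib \<phi> \<Lambda> (Suc (Suc n))) = ennreal (t (Suc n))" for n
    proof -
      have f: "real (Suc (Suc n)) / fact (Suc (Suc n)) = 1 / fact (Suc n)"
      proof -
        have "fact (Suc (Suc n)) = real (Suc (Suc n)) * (fact (Suc n)::real)" by (rule fact_Suc)
        then show ?thesis by (simp only:) (rule nonzero_divide_mult_cancel_left, simp)
      qed
      have "t (Suc n) = (real (Suc (Suc n)) / fact (Suc (Suc n))) * (s ^ Suc (Suc n) * Ib \<phi> \<Lambda> (Suc (Suc n)))"
        unfolding t_def diffs_def ac_def by (simp add: field_simps del: fact_Suc)
      then have tt: "t (Suc n) = 1 / fact (Suc n) * (s ^ Suc (Suc n) * Ib \<phi> \<Lambda> (Suc (Suc n)))" unfolding f .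
      show ?thesis unfolding tt by (rule ennreal_mult[symmetric]) (use s0 Ib_bounds(1) in auto)
    qed
    have tnn: "0 \<le> t m" for m unfolding t_def using s0 ac_nonneg by (simp add: diffs_def)
    have "ennreal (s * Zd \<phi> \<Lambda> s) = ennreal (suminf t)"
      unfolding t_def Zd_def by (subst suminf_mult) (auto intro: Zd_summable)
    also have "suminf t = t 0 + (\<Sum>n. t (Suc n))" using suminf_split_head[OF tsum] by simp
    also have "ennreal \<dots> = ennreal (t 0) + ennreal (\<Sum>n. t (Suc n))"
      using tnn tsum by (intro ennreal_plus suminf_nonneg) (auto simp: summable_Suc_iff)
    also have "ennreal (\<Sum>n. t (Suc n)) = (\<Sum>n. ennreal (t (Suc n)))"
      using tnn tsum by (intro suminf_ennreal2[symmetric]) (auto simp: summable_Suc_iff)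
    finally show ?thesis unfolding tS t0 ..
  qed
  finally show ?thesis .
qed

end


lemma Zact_ge1: "1 \<le> Zact \<phi> f"
  unfolding Zact_def gsum_gterm by (rule add_increasing2) auto

lemma gsum_le_Zact:
  assumes "\<And>x. 0 \<le> f x" "\<And>k x. g k x \<le> 1"
  shows "gsum \<phi> f g \<le> Zact \<phi> f"
  unfolding Zact_def using assms by (intro gsum_mono) auto

lemma act_box:
  fixes \<Lambda> :: "'a::euclidean_space set"
  assumes "0 \<le> s" "s \<le> lam" "\<Lambda> \<in> sets borel" "bounded \<Lambda>"
  shows "activity_le lam (\<lambda>x. s * indicator \<Lambda> x)"
proof -
  have "{x. s * indicator \<Lambda> x \<noteq> (0::real)} \<subseteq> \<Lambda>" by (auto simp: indicator_def)
  then have "bounded {x. s * indicator \<Lambda> x \<noteq> (0::real)}" using assms(4) bounded_subset by blast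
  moreover have "(\<lambda>x. s * indicator \<Lambda> x) \<in> borel_measurable borel" using assms(3) by measurable
  ultimately show ?thesis using assms(1,2) unfolding activity_le_def by (auto simp: indicator_def)
qed

lemma Zact_real:
  fixes f \<phi> :: "'a::euclidean_space \<Rightarrow> real"
  assumes "activity_le lam f" "\<And>x. 0 \<le> \<phi> x"
  shows "Zact \<phi> f = ennreal (enn2real (Zact \<phi> f))" "1 \<le> enn2real (Zact \<phi> f)"
proof -
  have t: "Zact \<phi> f < top" by (rule Zact_finite[OF assms])
  then show "Zact \<phi> f = ennreal (enn2real (Zact \<phi> f))" by (simp add: less_top ennreal_enn2real_if)
  have "enn2real 1 \<le> enn2real (Zact \<phi> f)" by (rule enn2real_mono[OF Zact_ge1 t])
  then show "1 \<le> enn2real (Zact \<phi> f)" by simp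
qed

lemma rho_fin_bounds:
  fixes f \<phi> :: "'a::euclidean_space \<Rightarrow> real"
  assumes "activity_le lam f" "\<And>x. 0 \<le> \<phi> x"
  shows "0 \<le> rho_fin \<phi> f v" "rho_fin \<phi> f v \<le> f v"
proof -
  have f0: "\<And>x. 0 \<le> f x" using assms(1) by (simp add: activity_le_def)
  have t: "Zact \<phi> f < top" by (rule Zact_finite[OF assms])
  have "enn2real (gsum \<phi> f (Fv \<phi> v)) \<le> enn2real (Zact \<phi> f)"
    by (intro enn2real_mono gsum_le_Zact f0 Fv_bounds assms(2) t)
  moreover have "1 \<le> enn2real (Zact \<phi> f)" using Zact_real[OF assms] by simp
  moreover have "0 \<le> enn2real (gsum \<phi> f (Fv \<phi> v))" by simp
  ultimately have "0 \<le> enn2real (gsum \<phi> f (Fv \<phi> v)) / enn2real (Zact \<phi> f)"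
    "enn2real (gsum \<phi> f (Fv \<phi> v)) / enn2real (Zact \<phi> f) \<le> 1"
    by (auto simp: divide_le_eq_1)
  then show "0 \<le> rho_fin \<phi> f v" "rho_fin \<phi> f v \<le> f v"
    unfolding rho_fin_alt using f0[of v] by (auto intro: mult_left_le simp del: times_divide_eq_right)
qed

context boxctx begin

lemma rho_meas:
  assumes s0: "0 \<le> s"
  shows "(\<lambda>v. rho_fin \<phi> (\<lambda>x. s * indicator \<Lambda> x) v) \<in> borel_measurable borel"
  unfolding rho_fin_alt using Wv_meas[of s] by measurable

lemma rho_int:
  assumes sym: "\<And>x. \<phi> (- x) = \<phi> x" and s0: "0 \<le> s"
  shows "(LBINT v:\<Lambda>. rho_fin \<phi> (\<lambda>x. s * indicator \<Lambda> x) v) = s * Zd \<phi> \<Lambda> s / Zr \<phi> \<Lambda> s"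
proof -
  let ?f = "\<lambda>x. s * indicator \<Lambda> x"
  let ?W = "\<lambda>v. gsum \<phi> ?f (Fv \<phi> v)"
  define Z where "Z = Zr \<phi> \<Lambda> s"
  have Z1: "1 \<le> Z" unfolding Z_def by (rule Zr_ge1[OF s0])
  have eZ: "enn2real (Zact \<phi> ?f) = Z" unfolding Zact_box[OF s0] Z_def using Z1 Z_def by simp
  have Wle: "?W v \<le> ennreal Z" for v
    unfolding Z_def Zact_box[OF s0, symmetric] using s0
    by (intro gsum_le_Zact Fv_bounds phi0) auto
  have Wfin: "ennreal (enn2real (?W v)) = ?W v" for v
    using Wle[of v] by (subst ennreal_enn2real_if) (auto simp: top_unique)
  have "(LBINT v:\<Lambda>. rho_fin \<phi> ?f v) = integral\<^sup>L lborel (\<lambda>v. indicator \<Lambda> v * rho_fin \<phi> ?f v)"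
    unfolding set_lebesgue_integral_def by simp
  also have "\<dots> = enn2real (\<integral>\<^sup>+ v. ennreal (indicator \<Lambda> v * rho_fin \<phi> ?f v) \<partial>lborel)"
    using rho_meas[OF s0] rho_fin_bounds(1)[OF act_box[OF s0 order_refl Lam_meas Lam_bdd] phi0]
    by (intro integral_eq_nn_integral) auto
  also have "(\<lambda>v. ennreal (indicator \<Lambda> v * rho_fin \<phi> ?f v)) = (\<lambda>v. ennreal (1 / Z) * (ennreal (s * indicator \<Lambda> v) * ?W v))"
  proof (rule ext)
    fix v
    have "indicator \<Lambda> v * rho_fin \<phi> ?f v = (1 / Z) * ((s * indicator \<Lambda> v) * enn2real (?W v))"
      unfolding rho_fin_alt eZ by (simp add: indicator_def)
    moreover have "ennreal (1 / Z) * (ennreal (s * indicator \<Lambda> v) * ?W v)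
        = ennreal (1 / Z) * (ennreal (s * indicator \<Lambda> v) * ennreal (enn2real (?W v)))"
      by (simp only: Wfin)
    moreover have "\<dots> = ennreal ((1 / Z) * ((s * indicator \<Lambda> v) * enn2real (?W v)))"
    proof -
      have a0: "0 \<le> s * indicator \<Lambda> v" using s0 by simp
      have e0: "0 \<le> enn2real (?W v)" by simp
      have z0: "0 \<le> 1 / Z" using Z1 by simp
      show ?thesis
        unfolding ennreal_mult[OF z0 mult_nonneg_nonneg[OF a0 e0]] ennreal_mult[OF a0 e0] ..
    qed
    ultimately show "ennreal (indicator \<Lambda> v * rho_fin \<phi> ?f v) = ennreal (1 / Z) * (ennreal (s * indicator \<Lambda> v) * ?W v)"
      by simp
  qed
  also have "(\<integral>\<^sup>+ v. ennreal (1 / Z) * (ennreal (s * indicator \<Lambda> v) * ?W v) \<partial>lborel)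
      = ennreal (1 / Z) * ennreal (s * Zd \<phi> \<Lambda> s)"
    using Wv_meas[of s] by (subst nn_integral_cmult) (auto simp: key_int[OF sym s0])
  also have "\<dots> = ennreal (s * Zd \<phi> \<Lambda> s / Z)"
    using Z1 s0 Zd_nonneg[OF s0] by (subst ennreal_mult[symmetric]) auto
  finally show ?thesis unfolding Z_def using Z1 s0 Zd_nonneg[OF s0] Z_def by simp
qed

end


lemma pred_eq_comp:
  fixes i j :: nat
  assumes "i < k" "j < k"
  shows "Measurable.pred (PiM {..<k} (\<lambda>_. (lborel::'a::euclidean_space measure))) (\<lambda>x. x i = x j)"
proof -
  have [measurable]: "i \<in> {..<k}" "j \<in> {..<k}" using assms by auto
  have "(\<lambda>x. x i - x j) \<in> borel_measurable (PiM {..<k} (\<lambda>_. (lborel::'a::euclidean_space measure)))"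
    by measurable
  then have "Measurable.pred (PiM {..<k} (\<lambda>_. (lborel::'a::euclidean_space measure))) (\<lambda>x. x i - x j = 0)"
    by measurable
  then show ?thesis by simp
qed

lemma null_diag:
  fixes i j k :: nat
  assumes "i < k" "j < k" "i \<noteq> j"
  shows "AE x in PiM {..<k} (\<lambda>_. (lborel::'a::euclidean_space measure)). x i \<noteq> x j"
proof -
  let ?P = "PiM {..<k} (\<lambda>_. (lborel::'a measure))"
  have I: "insert i ({..<k} - {i}) = {..<k}" using assms by auto
  have [measurable]: "Measurable.pred ?P (\<lambda>x. x i = x j)" by (rule pred_eq_comp[OF assms(1,2)])
  have "emeasure ?P {x \<in> space ?P. x i = x j} = (\<integral>\<^sup>+ x. indicator {x \<in> space ?P. x i = x j} x \<partial>?P)"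
    by (rule nn_integral_indicator[symmetric]) measurable
  also have "\<dots> = (\<integral>\<^sup>+ x. (\<integral>\<^sup>+ y. indicator {x \<in> space ?P. x i = x j} (x(i := y)) \<partial>lborel) \<partial>(PiM ({..<k} - {i}) (\<lambda>_. lborel)))"
    using product_sigma_finite.product_nn_integral_insert[OF psf_lborel, of "{..<k} - {i}" i
        "indicator {x \<in> space ?P. x i = x j}"] pred_eq_comp[OF assms(1,2)] unfolding I by simp
  also have "\<dots> = (\<integral>\<^sup>+ x. 0 \<partial>(PiM ({..<k} - {i}) (\<lambda>_. (lborel::'a measure))))"
  proof (rule nn_integral_cong)
    fix x assume x: "x \<in> space (PiM ({..<k} - {i}) (\<lambda>_. (lborel::'a measure)))"
    have "(\<integral>\<^sup>+ y. indicator {x \<in> space ?P. x i = x j} (x(i := y)) \<partial>lborel) \<le> (\<integral>\<^sup>+ y. indicator {x j} y \<partial>(lborel::'a measure))"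
      using assms by (intro nn_integral_mono) (auto simp: indicator_def)
    also have "\<dots> = 0" by simp
    finally show "(\<integral>\<^sup>+ y. indicator {x \<in> space ?P. x i = x j} (x(i := y)) \<partial>lborel) = 0" by simp
  qed
  finally have "emeasure ?P {x \<in> space ?P. x i = x j} = 0" by simp
  then show ?thesis
    by (intro AE_I[where N="{x \<in> space ?P. x i = x j}"]) auto
qed

lemma AE_inj:
  fixes k :: nat
  shows "AE x in PiM {..<k} (\<lambda>_. (lborel::'a::euclidean_space measure)). inj_on x {..<k}"
proof -
  have "AE x in PiM {..<k} (\<lambda>_. (lborel::'a::euclidean_space measure)). \<forall>i\<in>{..<k}. \<forall>j\<in>{..<k}. i \<noteq> j \<longrightarrow> x i \<noteq> x j"
  proof (intro AE_finite_allI)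
    fix i j assume "i \<in> {..<k}" "j \<in> {..<k}"
    then show "AE x in PiM {..<k} (\<lambda>_. (lborel::'a::euclidean_space measure)). i \<noteq> j \<longrightarrow> x i \<noteq> x j"
      using null_diag[of i k j] by (cases "i = j") auto
  qed auto
  then show ?thesis by eventually_elim (auto simp: inj_on_def)
qed

definition psi :: "('a::euclidean_space \<Rightarrow> real) \<Rightarrow> 'a \<Rightarrow> 'a set \<Rightarrow> real" where
  "psi \<phi> v S = (\<Sum>y\<in>S. \<phi> (v - y))"

lemma sum_image_first:
  fixes x :: "nat \<Rightarrow> 'a"
  shows "(\<Sum>y\<in>x ` {..<k}. h y) = (\<Sum>i<k. if (\<exists>i'\<in>{..<i}. x i' = x i) then 0 else h (x i))"
proof (induction k)
  case 0 then show ?case by simp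
next
  case (Suc k)
  have im: "x ` {..<Suc k} = insert (x k) (x ` {..<k})" by (auto simp: lessThan_Suc)
  show ?case
  proof (cases "\<exists>i'\<in>{..<k}. x i' = x k")
    case True
    then obtain i' where "i' < k" "x i' = x k" by auto
    then have "x k \<in> x ` {..<k}" by (metis image_eqI lessThan_iff)
    then have "x ` {..<Suc k} = x ` {..<k}" using im by auto
    then show ?thesis using Suc True by simp
  next
    case False
    then have "x k \<notin> x ` {..<k}" by force
    then show ?thesis using Suc False im by (simp add: add.commute)
  qed
qed

lemma psi_meas[measurable]:
  fixes \<phi> :: "'a::euclidean_space \<Rightarrow> real" and k :: nat
  assumes [measurable]: "\<phi> \<in> borel_measurable borel"
  shows "(\<lambda>x. psi \<phi> v (x ` {..<k})) \<in> borel_measurable (PiM {..<k} (\<lambda>_. (lborel::'a measure)))"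
proof -
  have [measurable]: "Measurable.pred (PiM {..<k} (\<lambda>_. (lborel::'a measure))) (\<lambda>x. \<exists>i'\<in>{..<i}. x i' = x i)"
    if "i \<in> {..<k}" for i
    using that by (intro pred_intros_finite(4)) (auto intro!: pred_eq_comp)
  have "(\<lambda>x. \<Sum>i<k. if (\<exists>i'\<in>{..<i}. x i' = x i) then 0 else \<phi> (v - x i)) \<in> borel_measurable (PiM {..<k} (\<lambda>_. (lborel::'a measure)))"
    by measurable
  then show ?thesis unfolding psi_def sum_image_first .
qed

lemma config_A:
  fixes \<phi> :: "'a::euclidean_space \<Rightarrow> real"
  assumes [measurable]: "\<phi> \<in> borel_measurable borel"
  shows "config_event {S. t < exp (- psi \<phi> v S)}"
  unfolding config_event_def by measurable

lemma psi_restrict: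
  fixes \<phi> :: "'a::euclidean_space \<Rightarrow> real"
  assumes "finite S" and r: "\<And>x. norm x > r \<Longrightarrow> \<phi> x = 0"
  shows "psi \<phi> v (S \<inter> cball v r) = psi \<phi> v S"
  unfolding psi_def
proof (rule sum.mono_neutral_left)
  show "\<forall>i\<in>S - S \<inter> cball v r. \<phi> (v - i) = 0"
  proof
    fix i assume "i \<in> S - S \<inter> cball v r"
    then have "norm (v - i) > r" by (auto simp: dist_norm)
    then show "\<phi> (v - i) = 0" by (rule r)
  qed
qed (use assms in auto)

lemma psi_inj:
  fixes k :: nat
  assumes "inj_on x {..<k}"
  shows "psi \<phi> v (x ` {..<k}) = (\<Sum>i<k. \<phi> (v - x i))"
  unfolding psi_def using assms by (simp add: sum.reindex)

lemma count_all:
  fixes y :: real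
  assumes "real N < y"
  shows "(\<Sum>j\<in>{1..N}. if real j < y then 1 else 0 :: real) = real N"
proof -
  have "(\<Sum>j\<in>{1..N}. if real j < y then 1 else 0 :: real) = (\<Sum>j\<in>{1..N}. 1)"
    using assms by (intro sum.cong) auto
  then show ?thesis by simp
qed

lemma count_bounds0:
  fixes y :: real
  shows "0 \<le> y \<Longrightarrow> y \<le> real N \<Longrightarrow> y - 1 \<le> (\<Sum>j\<in>{1..N}. if real j < y then 1 else 0 :: real) \<and>
    (\<Sum>j\<in>{1..N}. if real j < y then 1 else 0 :: real) \<le> y"
proof (induction N)
  case 0 then show ?case by simp
next
  case (Suc N)
  have split: "(\<Sum>j\<in>{1..Suc N}. if real j < y then 1 else 0 :: real)
     = (\<Sum>j\<in>{1..N}. if real j < y then 1 else 0) + (if real (Suc N) < y then 1 else 0)"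
    by (simp add: sum.cl_ivl_Suc)
  show ?case
  proof (cases "y \<le> real N")
    case True
    then show ?thesis using Suc split by auto
  next
    case False
    then show ?thesis using count_all[of N y] Suc split by auto
  qed
qed

lemma count_bounds:
  fixes y :: real
  assumes "0 \<le> y" "y \<le> real N"
  shows "y - 1 \<le> (\<Sum>j\<in>{1..N}. if real j < y then 1 else 0 :: real)"
    "(\<Sum>j\<in>{1..N}. if real j < y then 1 else 0 :: real) \<le> y"
  using count_bounds0[OF assms] by auto

lemma disc_bounds:
  fixes F :: real and N :: nat
  assumes "0 \<le> F" "F \<le> 1" "0 < N"
  shows "(1 / real N) * (\<Sum>j\<in>{1..N}. if real j / real N < F then 1 else 0) \<le> F"
    "F \<le> (1 / real N) * (\<Sum>j\<in>{1..N}. if real j / real N < F then 1 else 0) + 1 / real N"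
proof -
  have eq: "(\<Sum>j\<in>{1..N}. if real j / real N < F then 1 else 0 :: real) = (\<Sum>j\<in>{1..N}. if real j < real N * F then 1 else 0)"
    using assms(3) by (intro sum.cong refl) (simp add: divide_less_eq mult.commute)
  have y: "0 \<le> real N * F" "real N * F \<le> real N" using assms by (auto simp: mult_left_le)
  note cb = count_bounds[OF y]
  show "(1 / real N) * (\<Sum>j\<in>{1..N}. if real j / real N < F then 1 else 0) \<le> F"
    unfolding eq using cb(2) assms(3) by (simp add: divide_le_eq mult.commute)
  show "F \<le> (1 / real N) * (\<Sum>j\<in>{1..N}. if real j / real N < F then 1 else 0) + 1 / real N"
    unfolding eq using cb(1) assms(3) by (simp add: field_simps)
qed


locale kctx =
  fixes \<phi> :: "'a::euclidean_space \<Rightarrow> real" and r :: real and v :: 'a and N :: nat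
  assumes phi_meas[measurable]: "\<phi> \<in> borel_measurable borel"
    and phi0: "\<And>x. 0 \<le> \<phi> x"
    and phir: "\<And>x. norm x > r \<Longrightarrow> \<phi> x = 0"
    and N0: "0 < N"
begin

definition "A j = {S. real j / real N < exp (- psi \<phi> v S)}"
definition "H j (k::nat) (x::nat \<Rightarrow> 'a) = (indicator (A j) (x ` {..<k} \<inter> cball v r) :: real)"

lemma H_eq: "H j k x = (if real j / real N < exp (- psi \<phi> v (x ` {..<k})) then 1 else 0)"
  unfolding H_def A_def using psi_restrict[where S="x ` {..<k}" and r=r and \<phi>=\<phi> and v=v, OF _ phir] by (simp add: indicator_def)

lemma H_meas[measurable]: "H j k \<in> borel_measurable (PiM {..<k} (\<lambda>_. (lborel::'a measure)))"
proof -
  have [measurable]: "(\<lambda>x. psi \<phi> v (x ` {..<k})) \<in> borel_measurable (PiM {..<k} (\<lambda>_. (borel::'a measure)))"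
  proof -
    have "measurable (PiM {..<k} (\<lambda>_. (lborel::'a measure))) (borel::real measure) = measurable (PiM {..<k} (\<lambda>_. (borel::'a measure))) borel"
      by (intro measurable_cong_sets sets_PiM_cong) simp_all
    then show ?thesis using psi_meas[OF phi_meas, of v k] by simp
  qed
  show ?thesis unfolding H_eq[abs_def] by measurable
qed

lemma H_bounds: "0 \<le> H j k x" "H j k x \<le> 1"
  unfolding H_eq by auto

definition "D (k::nat) (x::nat \<Rightarrow> 'a) = (1 / real N) * (\<Sum>j\<in>{1..N}. H j k x)"

lemma D_meas[measurable]: "D k \<in> borel_measurable (PiM {..<k} (\<lambda>_. (lborel::'a measure)))"
  unfolding D_def[abs_def] by measurable

lemma D_Fv:
  assumes "inj_on x {..<k}"
  shows "D k x \<le> Fv \<phi> v k x" "Fv \<phi> v k x \<le> D k x + 1 / real N"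
proof -
  have e: "exp (- psi \<phi> v (x ` {..<k})) = Fv \<phi> v k x"
    unfolding Fv_def psi_inj[OF assms] ..
  have D: "D k x = (1 / real N) * (\<Sum>j\<in>{1..N}. if real j / real N < Fv \<phi> v k x then 1 else 0)"
    unfolding D_def H_eq e ..
  show "D k x \<le> Fv \<phi> v k x" "Fv \<phi> v k x \<le> D k x + 1 / real N"
    unfolding D using disc_bounds[OF Fv_bounds[OF phi0] N0] by auto
qed

lemma D_Fv_AE:
  "AE x in PiM {..<Suc n} (\<lambda>_. (lborel::'a measure)). D (Suc n) x \<le> Fv \<phi> v (Suc n) x"
  "AE x in PiM {..<Suc n} (\<lambda>_. (lborel::'a measure)). Fv \<phi> v (Suc n) x \<le> D (Suc n) x + 1 / real N"
  using AE_inj[of "Suc n"] by (auto elim!: eventually_mono intro: D_Fv)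

lemma D_Fv_0:
  "D 0 x \<le> Fv \<phi> v 0 x" "Fv \<phi> v 0 x \<le> D 0 x + 1 / real N"
  by (rule D_Fv; simp)+

lemma E_disc:
  assumes act: "activity_le lam f"
  shows "(1 / real N) * (\<Sum>j\<in>{1..N}. gibbs_prob \<phi> f (cball v r) (A j))
           \<le> enn2real (gsum \<phi> f (Fv \<phi> v)) / enn2real (Zact \<phi> f)"
    "enn2real (gsum \<phi> f (Fv \<phi> v)) / enn2real (Zact \<phi> f)
           \<le> (1 / real N) * (\<Sum>j\<in>{1..N}. gibbs_prob \<phi> f (cball v r) (A j)) + 1 / real N"
proof -
  have f0: "\<And>x. 0 \<le> f x" and [measurable]: "f \<in> borel_measurable borel"
    using act by (auto simp: activity_le_def)
  define z where "z = enn2real (Zact \<phi> f)"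
  have z: "Zact \<phi> f = ennreal z" "1 \<le> z" unfolding z_def using Zact_real[OF act phi0] by auto
  define h where "h j = enn2real (gsum \<phi> f (H j))" for j
  have hfin: "gsum \<phi> f (H j) = ennreal (h j)" for j
  proof -
    have "gsum \<phi> f (H j) \<le> Zact \<phi> f" by (intro gsum_le_Zact f0 H_bounds)
    then have le: "gsum \<phi> f (H j) \<le> ennreal z" using z(1) by simp
    then show ?thesis unfolding h_def by (subst ennreal_enn2real_if) (auto simp: top_unique)
  qed
  define w where "w = enn2real (gsum \<phi> f (Fv \<phi> v))"
  have wfin: "gsum \<phi> f (Fv \<phi> v) = ennreal w"
  proof -
    have "gsum \<phi> f (Fv \<phi> v) \<le> Zact \<phi> f" by (intro gsum_le_Zact f0 Fv_bounds phi0)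
    then have le: "gsum \<phi> f (Fv \<phi> v) \<le> ennreal z" using z(1) by simp
    then show ?thesis unfolding w_def by (subst ennreal_enn2real_if) (auto simp: top_unique)
  qed
  have h0: "0 \<le> h j" for j unfolding h_def by simp
  have w0: "0 \<le> w" unfolding w_def by simp
  have gD: "gsum \<phi> f D = ennreal ((1 / real N) * (\<Sum>j\<in>{1..N}. h j))"
  proof -
    have "gsum \<phi> f D = ennreal (1 / real N) * gsum \<phi> f (\<lambda>k x. \<Sum>j\<in>{1..N}. H j k x)"
      unfolding D_def by (rule gsum_cmult) (auto intro!: f0 sum_nonneg H_bounds)
    also have "gsum \<phi> f (\<lambda>k x. \<Sum>j\<in>{1..N}. H j k x) = (\<Sum>j\<in>{1..N}. gsum \<phi> f (H j))"
      by (rule gsum_sum) (auto intro!: f0 H_bounds)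
    also have "\<dots> = ennreal (\<Sum>j\<in>{1..N}. h j)" unfolding hfin using h0 by simp
    finally show ?thesis using h0 by (simp add: ennreal_mult[symmetric] sum_nonneg)
  qed
  have low: "gsum \<phi> f D \<le> gsum \<phi> f (Fv \<phi> v)"
    by (intro gsum_mono f0 D_Fv_AE D_Fv_0)
  have up1: "gsum \<phi> f (Fv \<phi> v) \<le> gsum \<phi> f (\<lambda>k x. D k x + (1 / real N) * 1)"
    by (intro gsum_mono f0) (use D_Fv_AE D_Fv_0 in auto)
  have up2: "gsum \<phi> f (\<lambda>k x. D k x + (1 / real N) * 1) = gsum \<phi> f D + ennreal (1 / real N) * Zact \<phi> f"
  proof -
    have "gsum \<phi> f (\<lambda>k x. D k x + (1 / real N) * 1) = gsum \<phi> f D + gsum \<phi> f (\<lambda>k x. (1 / real N) * 1)"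
      by (rule gsum_add) (auto intro!: f0 divide_nonneg_nonneg sum_nonneg H_bounds simp: D_def)
    also have "gsum \<phi> f (\<lambda>k x. (1 / real N) * 1) = ennreal (1 / real N) * Zact \<phi> f"
      unfolding Zact_def by (rule gsum_cmult) (auto intro!: f0)
    finally show ?thesis .
  qed
  have r1: "(1 / real N) * (\<Sum>j\<in>{1..N}. h j) \<le> w"
    using low unfolding gD wfin using w0 by (simp add: ennreal_le_iff)
  have a0: "0 \<le> (1 / real N) * (\<Sum>j\<in>{1..N}. h j)" using h0 by (simp add: sum_nonneg)
  have e1: "ennreal (1 / real N) * ennreal z = ennreal ((1 / real N) * z)"
    by (rule ennreal_mult[symmetric]) (use z(2) in auto)
  have e2: "ennreal ((1 / real N) * (\<Sum>j\<in>{1..N}. h j)) + ennreal ((1 / real N) * z)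
      = ennreal ((1 / real N) * (\<Sum>j\<in>{1..N}. h j) + (1 / real N) * z)"
    by (rule ennreal_plus[symmetric]) (use a0 z(2) in auto)
  have "ennreal w \<le> ennreal ((1 / real N) * (\<Sum>j\<in>{1..N}. h j) + (1 / real N) * z)"
    using up1 unfolding up2 gD wfin z(1) e1 e2 .
  then have r2: "w \<le> (1 / real N) * (\<Sum>j\<in>{1..N}. h j) + (1 / real N) * z"
    by (subst (asm) ennreal_le_iff) (use a0 z(2) in auto)
  have P: "gibbs_prob \<phi> f (cball v r) (A j) = h j / z" for j
    unfolding gibbs_prob_def h_def z_def H_def ..
  have sumP: "(\<Sum>j\<in>{1..N}. gibbs_prob \<phi> f (cball v r) (A j)) = (\<Sum>j\<in>{1..N}. h j) / z"
    unfolding P by (simp add: sum_divide_distrib)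
  show "(1 / real N) * (\<Sum>j\<in>{1..N}. gibbs_prob \<phi> f (cball v r) (A j))
           \<le> enn2real (gsum \<phi> f (Fv \<phi> v)) / enn2real (Zact \<phi> f)"
    unfolding sumP w_def[symmetric] z_def[symmetric] times_divide_eq_right
    by (rule divide_right_mono[OF r1]) (use z(2) in simp)
  show "enn2real (gsum \<phi> f (Fv \<phi> v)) / enn2real (Zact \<phi> f)
           \<le> (1 / real N) * (\<Sum>j\<in>{1..N}. gibbs_prob \<phi> f (cball v r) (A j)) + 1 / real N"
    unfolding sumP w_def[symmetric] z_def[symmetric] using r2 z(2)
    by (simp add: field_simps)
qed

end

lemma ssm_rho:
  fixes \<phi> f g :: "'a::euclidean_space \<Rightarrow> real"
  assumes phim: "\<phi> \<in> borel_measurable borel" and phi0: "\<And>x. 0 \<le> \<phi> x"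
    and phir: "\<And>x. norm x > r \<Longrightarrow> \<phi> x = 0"
    and actf: "activity_le lam f" and actg: "activity_le lam g" and fg: "f v = g v"
    and hyp: "\<And>A. config_event A \<Longrightarrow> \<bar>gibbs_prob \<phi> f (cball v r) A - gibbs_prob \<phi> g (cball v r) A\<bar> \<le> B"
  shows "\<bar>rho_fin \<phi> f v - rho_fin \<phi> g v\<bar> \<le> f v * B"
proof -
  define Ef where "Ef = enn2real (gsum \<phi> f (Fv \<phi> v)) / enn2real (Zact \<phi> f)"
  define Eg where "Eg = enn2real (gsum \<phi> g (Fv \<phi> v)) / enn2real (Zact \<phi> g)"
  have main: "\<bar>Ef - Eg\<bar> \<le> B + 1 / real N" if N0: "0 < N" for N
  proof -
    interpret kctx \<phi> r v N using phim phi0 phir N0 by unfold_locales auto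
    note bf = E_disc[OF actf, folded Ef_def]
    note bg = E_disc[OF actg, folded Eg_def]
    let ?Pf = "\<lambda>j. gibbs_prob \<phi> f (cball v r) (A j)"
    let ?Pg = "\<lambda>j. gibbs_prob \<phi> g (cball v r) (A j)"
    have cA: "config_event (A j)" for j unfolding A_def by (rule config_A[OF phim])
    have s1: "(\<Sum>j\<in>{1..N}. ?Pf j) - (\<Sum>j\<in>{1..N}. ?Pg j) \<le> real N * B"
    proof -
      have "(\<Sum>j\<in>{1..N}. ?Pf j) - (\<Sum>j\<in>{1..N}. ?Pg j) = (\<Sum>j\<in>{1..N}. ?Pf j - ?Pg j)"
        by (simp add: sum_subtractf)
      also have "\<dots> \<le> (\<Sum>j\<in>{1..N}. B)" using hyp[OF cA] by (intro sum_mono) (simp add: abs_le_iff)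
      finally show ?thesis by simp
    qed
    have s2: "(\<Sum>j\<in>{1..N}. ?Pg j) - (\<Sum>j\<in>{1..N}. ?Pf j) \<le> real N * B"
    proof -
      have "(\<Sum>j\<in>{1..N}. ?Pg j) - (\<Sum>j\<in>{1..N}. ?Pf j) = (\<Sum>j\<in>{1..N}. ?Pg j - ?Pf j)"
        by (simp add: sum_subtractf)
      also have "\<dots> \<le> (\<Sum>j\<in>{1..N}. B)" using hyp[OF cA] by (intro sum_mono) (simp add: abs_le_iff)
      finally show ?thesis by simp
    qed
    have Np: "0 < real N" using N0 by simp
    have t1: "(1 / real N) * (\<Sum>j\<in>{1..N}. ?Pf j) - (1 / real N) * (\<Sum>j\<in>{1..N}. ?Pg j) \<le> B"
    proof -
      have "(1 / real N) * (\<Sum>j\<in>{1..N}. ?Pf j) - (1 / real N) * (\<Sum>j\<in>{1..N}. ?Pg j)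
          = ((\<Sum>j\<in>{1..N}. ?Pf j) - (\<Sum>j\<in>{1..N}. ?Pg j)) / real N"
        by (simp add: diff_divide_distrib)
      also have "\<dots> \<le> B" using s1 Np by (simp add: pos_divide_le_eq mult.commute)
      finally show ?thesis .
    qed
    have t2: "(1 / real N) * (\<Sum>j\<in>{1..N}. ?Pg j) - (1 / real N) * (\<Sum>j\<in>{1..N}. ?Pf j) \<le> B"
    proof -
      have "(1 / real N) * (\<Sum>j\<in>{1..N}. ?Pg j) - (1 / real N) * (\<Sum>j\<in>{1..N}. ?Pf j)
          = ((\<Sum>j\<in>{1..N}. ?Pg j) - (\<Sum>j\<in>{1..N}. ?Pf j)) / real N"
        by (simp add: diff_divide_distrib)
      also have "\<dots> \<le> B" using s2 Np by (simp add: pos_divide_le_eq mult.commute)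
      finally show ?thesis .
    qed
    show ?thesis using bf bg t1 t2 by (simp add: abs_le_iff)
  qed
  have "\<bar>Ef - Eg\<bar> \<le> B"
  proof (rule field_le_epsilon)
    fix e :: real assume "0 < e"
    then obtain n :: nat where n: "0 < n" "inverse (real n) < e" using ex_inverse_of_nat_less by blast
    then show "\<bar>Ef - Eg\<bar> \<le> B + e" using main[OF n(1)] by (simp add: inverse_eq_divide)
  qed
  moreover have "rho_fin \<phi> f v - rho_fin \<phi> g v = f v * (Ef - Eg)"
    unfolding rho_fin_alt Ef_def Eg_def fg by (simp add: right_diff_distrib)
  moreover have "0 \<le> f v" using actf by (simp add: activity_le_def)
  ultimately show ?thesis by (simp add: abs_mult mult_left_mono)
qed


lemma rho_fin_transl:
  fixes \<phi> f :: "'a::euclidean_space \<Rightarrow> real"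
  assumes [measurable]: "\<phi> \<in> borel_measurable borel" "f \<in> borel_measurable borel"
  shows "rho_fin \<phi> f v = rho_fin \<phi> (\<lambda>y. f (v + y)) 0"
proof -
  have a: "gsum \<phi> f (Fv \<phi> v) = gsum \<phi> (\<lambda>y. f (v + y)) (Fv \<phi> 0)"
  proof -
    have "gsum \<phi> f (Fv \<phi> v) = gsum \<phi> (\<lambda>y. f (v + y)) (\<lambda>k x. Fv \<phi> v k (restrict (\<lambda>i. v + x i) {..<k}))"
      by (rule gsum_transl) measurable
    also have "(\<lambda>k x. Fv \<phi> v k (restrict (\<lambda>i. v + x i) {..<k})) = Fv \<phi> 0"
      by (intro ext) (simp add: Fv_def)
    finally show ?thesis .
  qed
  have b: "Zact \<phi> f = Zact \<phi> (\<lambda>y. f (v + y))"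
    unfolding Zact_def by (rule gsum_transl[where g="\<lambda>k x. 1", simplified]) measurable
  show ?thesis unfolding rho_fin_alt a b by simp
qed

lemma act_shift:
  fixes \<Lambda> :: "'a::euclidean_space set"
  assumes "0 \<le> s" "s \<le> lam" "\<Lambda> \<in> sets borel" "bounded \<Lambda>"
  shows "activity_le lam (\<lambda>x. s * indicator \<Lambda> (v + x))"
proof -
  have e: "(\<lambda>x. s * indicator \<Lambda> (v + x)) = (\<lambda>x. s * indicator ((+) v -` \<Lambda>) x)"
    by (auto simp: indicator_def)
  have m: "(+) v -` \<Lambda> \<in> sets borel"
  proof -
    have "((+) v) \<in> borel_measurable (borel::'a measure)" by simp
    from measurable_sets[OF this, of \<Lambda>] assms(3) show ?thesis by simp
  qed
  have "(+) v -` \<Lambda> = (\<lambda>y. (- v) + y) ` \<Lambda>"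
  proof (intro set_eqI iffI)
    fix x assume "x \<in> (+) v -` \<Lambda>"
    then have "v + x \<in> \<Lambda>" by simp
    then show "x \<in> (\<lambda>y. (- v) + y) ` \<Lambda>" by (rule rev_image_eqI) simp
  next
    fix x assume "x \<in> (\<lambda>y. (- v) + y) ` \<Lambda>"
    then obtain y where "y \<in> \<Lambda>" "x = - v + y" by auto
    then show "x \<in> (+) v -` \<Lambda>" by simp
  qed
  then have bd: "bounded ((+) v -` \<Lambda>)" using bounded_translation[OF assms(4), of "- v"] by simp
  show ?thesis unfolding e by (rule act_box[OF assms(1,2) m bd])
qed

locale mainctx =
  fixes \<phi> :: "'a::euclidean_space \<Rightarrow> real" and lam r \<alpha> \<beta> :: real
  assumes phi_meas[measurable]: "\<phi> \<in> borel_measurable borel"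
    and phi0: "\<And>x. 0 \<le> \<phi> x"
    and phisym: "\<And>x. \<phi> (- x) = \<phi> x"
    and phir: "\<And>x. norm x > r \<Longrightarrow> \<phi> x = 0"
    and r0: "0 \<le> r"
    and lam0: "0 < lam"
    and alpha0: "0 < \<alpha>" and beta0: "0 < \<beta>"
    and ssmb: "\<And>f g \<Lambda> A. activity_le lam f \<Longrightarrow> activity_le lam g \<Longrightarrow> \<Lambda> \<in> sets lborel \<Longrightarrow> bounded \<Lambda> \<Longrightarrow>
      config_event A \<Longrightarrow>
      \<bar>gibbs_prob \<phi> f \<Lambda> A - gibbs_prob \<phi> g \<Lambda> A\<bar>
        \<le> \<alpha> * measure lborel \<Lambda> * exp (- \<beta> * setdist \<Lambda> (closure {x. f x \<noteq> g x}))"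
begin

definition "C0 = \<alpha> * measure lborel (cball (0::'a) r)"

lemma C0_nonneg: "0 \<le> C0" unfolding C0_def using alpha0 by simp

lemma sep:
  fixes f g :: "'a \<Rightarrow> real"
  assumes actf: "activity_le lam f" and actg: "activity_le lam g" and fg: "f 0 = g 0"
    and sub: "{x. f x \<noteq> g x} \<subseteq> {x. L \<le> norm x}"
  shows "\<bar>rho_fin \<phi> f 0 - rho_fin \<phi> g 0\<bar> \<le> f 0 * (C0 * exp (- \<beta> * (L - r)))"
proof (cases "{x. f x \<noteq> g x} = {}")
  case True
  then have "f = g" by auto
  moreover have "0 \<le> f 0" using actf by (simp add: activity_le_def)
  ultimately show ?thesis using C0_nonneg by simp
next
  case False
  let ?T = "closure {x. f x \<noteq> g x}"
  have cl: "?T \<subseteq> {x. L \<le> norm x}"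
    using sub by (intro closure_minimal) (auto intro: closed_Collect_le continuous_intros)
  have sd: "L - r \<le> setdist (cball 0 r) ?T"
  proof (rule le_setdistI)
    show "cball (0::'a) r \<noteq> {}" using r0 by simp
    show "?T \<noteq> {}" using False closure_subset by blast
    fix a b assume a: "a \<in> cball (0::'a) r" and b: "b \<in> ?T"
    have "L \<le> norm b" using cl b by auto
    moreover have "norm a \<le> r" using a by simp
    moreover have "norm b - norm a \<le> dist a b"
      using norm_triangle_ineq2[of b a] by (metis dist_commute dist_norm)
    ultimately show "L - r \<le> dist a b" by linarith
  qed
  have "\<bar>rho_fin \<phi> f 0 - rho_fin \<phi> g 0\<bar> \<le> f 0 * (\<alpha> * measure lborel (cball (0::'a) r) * exp (- \<beta> * setdist (cball 0 r) ?T))"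
  proof (rule ssm_rho[OF phi_meas phi0 phir actf actg fg])
    fix A :: "'a set set" assume "config_event A"
    then show "\<bar>gibbs_prob \<phi> f (cball 0 r) A - gibbs_prob \<phi> g (cball 0 r) A\<bar>
      \<le> \<alpha> * measure lborel (cball (0::'a) r) * exp (- \<beta> * setdist (cball 0 r) ?T)"
      by (intro ssmb actf actg) auto
  qed
  also have "\<dots> \<le> f 0 * (C0 * exp (- \<beta> * (L - r)))"
  proof -
    have e: "exp (- \<beta> * setdist (cball 0 r) ?T) \<le> exp (- \<beta> * (L - r))"
      using mult_left_mono[OF sd, of \<beta>] beta0 by simp
    have K: "0 \<le> \<alpha> * measure lborel (cball (0::'a) r)" using alpha0 by simp
    have f0: "0 \<le> f 0" using actf by (simp add: activity_le_def)
    show ?thesis unfolding C0_def by (rule mult_left_mono[OF mult_left_mono[OF e K] f0])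
  qed
  finally show ?thesis .
qed

end


lemma exp_small:
  fixes K \<beta> r e :: real
  assumes "0 < \<beta>" "0 < e" "0 \<le> K"
  shows "\<exists>M::nat. \<forall>t\<ge>real M. K * exp (- \<beta> * (t - r)) < e"
proof (cases "K = 0")
  case True then show ?thesis using assms by auto
next
  case False
  then have K: "0 < K" using assms by simp
  obtain M :: nat where M: "r + ln (K / e) / \<beta> < real M" using reals_Archimedean2 by blast
  have "K * exp (- \<beta> * (t - r)) < e" if t: "t \<ge> real M" for t
  proof -
    have "ln (K / e) / \<beta> < t - r" using M t by linarith
    then have "ln (K / e) < \<beta> * (t - r)" using assms(1) by (simp add: divide_less_eq mult.commute)
    then have "exp (- \<beta> * (t - r)) < exp (- ln (K / e))" by simp
    also have "exp (- ln (K / e)) = e / K" using K assms(2) by (simp add: exp_minus)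
    finally show ?thesis using K by (simp add: field_simps)
  qed
  then show ?thesis by blast
qed

context mainctx begin

definition "bseq s m = rho_fin \<phi> (\<lambda>x. s * indicator (ball (0::'a) (real m)) x) 0"

lemma act_ball: "0 \<le> s \<Longrightarrow> s \<le> lam \<Longrightarrow> activity_le lam (\<lambda>x. s * indicator (ball (0::'a) R) x)"
  by (rule act_box) auto

lemma b_step:
  assumes s: "0 < s" "s \<le> lam" and m: "0 < m" "m \<le> m'"
  shows "\<bar>bseq s m - bseq s m'\<bar> \<le> s * (C0 * exp (- \<beta> * (real m - r)))"
proof -
  have "\<bar>bseq s m - bseq s m'\<bar> \<le> (\<lambda>x. s * indicator (ball (0::'a) (real m)) x) 0 * (C0 * exp (- \<beta> * (real m - r)))"
    unfolding bseq_def
  proof (rule sep)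
    show "activity_le lam (\<lambda>x. s * indicator (ball (0::'a) (real m)) x)" using s by (intro act_ball) auto
    show "activity_le lam (\<lambda>x. s * indicator (ball (0::'a) (real m')) x)" using s by (intro act_ball) auto
    show "s * indicator (ball (0::'a) (real m)) 0 = s * indicator (ball (0::'a) (real m')) 0" using m by simp
    show "{x. s * indicator (ball (0::'a) (real m)) x \<noteq> s * indicator (ball 0 (real m')) x} \<subseteq> {x. real m \<le> norm x}"
      using m s by (auto simp: indicator_def)
  qed
  then show ?thesis using m by simp
qed

lemma rho_const: "rho \<phi> (\<lambda>_. s) 0 = lim (bseq s)" if "s \<noteq> 0"
proof -
  have "\<not> bounded {x::'a. s \<noteq> 0}" using that by (simp add: not_bounded_UNIV)
  then show ?thesis unfolding rho_def bseq_def[abs_def] by simp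
qed

lemma b_conv:
  assumes s: "0 < s" "s \<le> lam"
  shows "bseq s \<longlonglongrightarrow> rho \<phi> (\<lambda>_. s) 0"
proof -
  have "Cauchy (bseq s)"
  proof (rule CauchyI)
    fix e :: real assume e: "0 < e"
    obtain M :: nat where M: "\<forall>t\<ge>real M. (s * C0) * exp (- \<beta> * (t - r)) < e"
      using exp_small[OF beta0 e, of "s * C0" r] s C0_nonneg by auto
    have "norm (bseq s m - bseq s n) < e" if mn: "m \<ge> Suc M" "n \<ge> Suc M" for m n
    proof -
      have key: "\<bar>bseq s a - bseq s b\<bar> < e" if ab: "Suc M \<le> a" "a \<le> b" for a b
      proof -
        have "\<bar>bseq s a - bseq s b\<bar> \<le> s * (C0 * exp (- \<beta> * (real a - r)))"
          using ab by (intro b_step s) auto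
        also have "\<dots> < e" using M ab by (simp add: mult.assoc)
        finally show ?thesis .
      qed
      show ?thesis
      proof (cases "m \<le> n")
        case True then show ?thesis using key[of m n] mn by simp
      next
        case False then show ?thesis using key[of n m] mn by (simp add: abs_minus_commute)
      qed
    qed
    then show "\<exists>M. \<forall>m\<ge>M. \<forall>n\<ge>M. norm (bseq s m - bseq s n) < e" by blast
  qed
  then have "convergent (bseq s)" by (simp add: Cauchy_convergent_iff)
  moreover have "rho \<phi> (\<lambda>_. s) 0 = lim (bseq s)" using s by (intro rho_const) auto
  ultimately show ?thesis by (simp add: convergent_LIMSEQ_iff)
qed

lemma rho_bounds:
  assumes s: "0 < s" "s \<le> lam"
  shows "0 \<le> rho \<phi> (\<lambda>_. s) 0" "rho \<phi> (\<lambda>_. s) 0 \<le> s"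
proof -
  have bb: "0 \<le> bseq s m \<and> bseq s m \<le> s" for m
  proof -
    have a: "activity_le lam (\<lambda>x. s * indicator (ball (0::'a) (real m)) x)" using s by (intro act_ball) auto
    show ?thesis unfolding bseq_def using rho_fin_bounds[where \<phi>=\<phi> and v=0, OF a phi0] s
      by (cases "0 < m") (auto simp: indicator_def split: if_splits)
  qed
  show "0 \<le> rho \<phi> (\<lambda>_. s) 0" using b_conv[OF s] bb by (intro LIMSEQ_le_const) auto
  show "rho \<phi> (\<lambda>_. s) 0 \<le> s" using b_conv[OF s] bb by (intro LIMSEQ_le_const2) auto
qed

lemma G_bound:
  assumes s: "0 < s" "s \<le> lam" and Lam: "\<Lambda> \<in> sets borel" "bounded \<Lambda>"
    and L: "0 < L" and sub: "ball 0 L \<subseteq> {x. v + x \<in> \<Lambda>}"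
  shows "\<bar>rho_fin \<phi> (\<lambda>x. s * indicator \<Lambda> x) v - rho \<phi> (\<lambda>_. s) 0\<bar> \<le> s * (C0 * exp (- \<beta> * (L - r)))"
proof -
  let ?f = "\<lambda>x. s * indicator \<Lambda> (v + x)"
  have tr: "rho_fin \<phi> (\<lambda>x. s * indicator \<Lambda> x) v = rho_fin \<phi> ?f 0"
    by (rule rho_fin_transl) (use Lam in measurable)
  have actf: "activity_le lam ?f" using s Lam by (intro act_shift) auto
  have "v \<in> \<Lambda>" using subsetD[OF sub, of 0] L by simp
  then have f0: "?f 0 = s" by simp
  have step: "\<bar>rho_fin \<phi> ?f 0 - bseq s m\<bar> \<le> s * (C0 * exp (- \<beta> * (L - r)))" if m: "L \<le> real m" for m
  proof -
    have "\<bar>rho_fin \<phi> ?f 0 - bseq s m\<bar> \<le> ?f 0 * (C0 * exp (- \<beta> * (L - r)))"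
      unfolding bseq_def
    proof (rule sep[OF actf])
      show "activity_le lam (\<lambda>x. s * indicator (ball (0::'a) (real m)) x)" using s by (intro act_ball) auto
      show "?f 0 = s * indicator (ball (0::'a) (real m)) 0" using f0 m L by simp
      show "{x. ?f x \<noteq> s * indicator (ball (0::'a) (real m)) x} \<subseteq> {x. L \<le> norm x}"
      proof
        fix x assume x: "x \<in> {x. ?f x \<noteq> s * indicator (ball (0::'a) (real m)) x}"
        show "x \<in> {x. L \<le> norm x}"
        proof (rule ccontr)
          assume "x \<notin> {x. L \<le> norm x}"
          then have "norm x < L" by simp
          then have "v + x \<in> \<Lambda>" "x \<in> ball 0 (real m)" using sub m by auto
          then show False using x by (simp add: indicator_def)
        qed
      qed
    qed
    then show ?thesis unfolding f0 .
  qed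
  have lim: "(\<lambda>m. \<bar>rho_fin \<phi> ?f 0 - bseq s m\<bar>) \<longlonglongrightarrow> \<bar>rho_fin \<phi> ?f 0 - rho \<phi> (\<lambda>_. s) 0\<bar>"
    by (intro tendsto_intros b_conv[OF s])
  obtain M :: nat where "L \<le> real M" using real_nat_ceiling_ge by blast
  then have "\<forall>m\<ge>M. \<bar>rho_fin \<phi> ?f 0 - bseq s m\<bar> \<le> s * (C0 * exp (- \<beta> * (L - r)))"
  proof (intro allI impI)
    fix m assume "M \<le> m" "L \<le> real M"
    then have "real M \<le> real m" by simp
    then have "L \<le> real m" using \<open>L \<le> real M\<close> by linarith
    then show "\<bar>rho_fin \<phi> ?f 0 - bseq s m\<bar> \<le> s * (C0 * exp (- \<beta> * (L - r)))" by (rule step)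
  qed
  then have "\<bar>rho_fin \<phi> ?f 0 - rho \<phi> (\<lambda>_. s) 0\<bar> \<le> s * (C0 * exp (- \<beta> * (L - r)))"
    using lim by (intro LIMSEQ_le_const2) auto
  then show ?thesis unfolding tr .
qed

end


definition bx :: "real \<Rightarrow> 'a::euclidean_space set" where
  "bx c = cbox (- (c *\<^sub>R One)) (c *\<^sub>R One)"

lemma bx_meas[measurable]: "bx c \<in> sets borel" unfolding bx_def by simp
lemma bx_bdd: "bounded (bx c)" unfolding bx_def by (rule bounded_cbox)

lemma V_eq: assumes "0 \<le> c" shows "measure lborel (bx c :: 'a::euclidean_space set) = (2 * c) ^ DIM('a)"
proof -
  have "measure lborel (bx c :: 'a set) = (\<Prod>b\<in>(Basis::'a set). (c *\<^sub>R One - - (c *\<^sub>R One)) \<bullet> b)"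
    unfolding bx_def measure_lborel_cbox_eq using assms by (auto simp: inner_sum_Basis)
  also have "\<dots> = (\<Prod>b\<in>(Basis::'a set). 2 * c)"
    by (intro prod.cong refl) (simp add: inner_sum_Basis algebra_simps)
  finally show ?thesis by simp
qed

lemma bx_mono: assumes "c \<le> c'" shows "bx c \<subseteq> (bx c' :: 'a::euclidean_space set)"
  unfolding bx_def using assms by (auto simp: mem_box inner_sum_Basis) (smt (verit))+

lemma inner_ball:
  assumes "0 < L" "v \<in> (bx (n - L) :: 'a::euclidean_space set)"
  shows "ball 0 L \<subseteq> {x. v + x \<in> (bx n :: 'a set)}"
proof
  fix x :: 'a assume "x \<in> ball 0 L"
  then have x: "norm x < L" by simp
  have "\<bar>x \<bullet> b\<bar> < L" if "b \<in> Basis" for b using Basis_le_norm[OF that, of x] x by simp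
  then show "x \<in> {x. v + x \<in> bx n}" using assms(2) unfolding bx_def
    by (auto simp: mem_box inner_sum_Basis inner_add_left abs_less_iff) (smt (verit))+
qed


context mainctx begin

lemma avg_bound:
  assumes s: "0 < s" "s \<le> lam" and L: "0 < L" "L \<le> n"
  shows "\<bar>(LBINT v:bx n. rho_fin \<phi> (\<lambda>x. s * indicator (bx n) x) v) - rho \<phi> (\<lambda>_. s) 0 * measure lborel (bx n :: 'a set)\<bar>
    \<le> s * (C0 * exp (- \<beta> * (L - r))) * measure lborel (bx n :: 'a set) + s * (measure lborel (bx n :: 'a set) - measure lborel (bx (n - L) :: 'a set))"
proof -
  let ?B = "bx n :: 'a set" and ?B' = "bx (n - L) :: 'a set"
  let ?G = "\<lambda>v. rho_fin \<phi> (\<lambda>x. s * indicator ?B x) v"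
  let ?\<rho> = "rho \<phi> (\<lambda>_. s) 0"
  let ?e = "s * (C0 * exp (- \<beta> * (L - r)))"
  interpret boxctx \<phi> ?B by unfold_locales (auto intro: phi0 bx_bdd)
  have actB: "activity_le lam (\<lambda>x. s * indicator ?B x)" using s by (intro act_box bx_bdd) auto
  have Gm[measurable]: "?G \<in> borel_measurable borel" using rho_meas s by simp
  have Gb: "0 \<le> ?G v" "?G v \<le> s * indicator ?B v" for v
    using rho_fin_bounds[where \<phi>=\<phi> and v=v, OF actB phi0] by auto
  have rb: "0 \<le> ?\<rho>" "?\<rho> \<le> s" using rho_bounds[OF s] by auto
  have finB: "emeasure lborel ?B < top" using emeasure_bounded_finite[OF bx_bdd] by simp
  have finB': "emeasure lborel ?B' < top" using emeasure_bounded_finite[OF bx_bdd] by simp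
  have intB: "integrable lborel (indicator ?B :: 'a \<Rightarrow> real)" using finB by simp
  have intD: "integrable lborel (indicator (?B - ?B') :: 'a \<Rightarrow> real)"
    using finB by (intro integrable_real_indicator) (auto intro: le_less_trans[OF emeasure_mono])
  have intG: "integrable lborel (\<lambda>v. indicator ?B v * ?G v)"
  proof (rule Bochner_Integration.integrable_bound[OF integrable_mult_right[OF intB, of s]])
    show "(\<lambda>v. indicator ?B v * ?G v) \<in> borel_measurable lborel" by measurable
    show "AE v in lborel. norm (indicator ?B v * ?G v) \<le> norm (s * indicator ?B v)"
    proof (rule AE_I2)
      fix v
      show "norm (indicator ?B v * ?G v) \<le> norm (s * indicator ?B v)"
        using Gb[of v] s by (cases "v \<in> ?B") (auto simp: indicator_def)
    qed
  qed
  have LB: "(LBINT v:?B. ?G v) = integral\<^sup>L lborel (\<lambda>v. indicator ?B v * ?G v)"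
    unfolding set_lebesgue_integral_def by simp
  have "(LBINT v:?B. ?G v) - ?\<rho> * measure lborel ?B = integral\<^sup>L lborel (\<lambda>v. indicator ?B v * (?G v - ?\<rho>))"
  proof -
    have "integral\<^sup>L lborel (\<lambda>v. indicator ?B v * (?G v - ?\<rho>))
       = integral\<^sup>L lborel (\<lambda>v. indicator ?B v * ?G v - ?\<rho> * indicator ?B v)"
      by (simp add: algebra_simps)
    also have "\<dots> = integral\<^sup>L lborel (\<lambda>v. indicator ?B v * ?G v) - ?\<rho> * integral\<^sup>L lborel (indicator ?B)"
      using intG intB by simp
    finally show ?thesis unfolding LB by simp
  qed
  also have "\<bar>\<dots>\<bar> \<le> integral\<^sup>L lborel (\<lambda>v. ?e * indicator ?B v + s * indicator (?B - ?B') v)"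
  proof (rule integral_abs_bound_integral)
    show "integrable lborel (\<lambda>v. indicator ?B v * (?G v - ?\<rho>))"
      using intG intB by (simp add: right_diff_distrib)
    show "integrable lborel (\<lambda>v. ?e * indicator ?B v + s * indicator (?B - ?B') v)"
      using intB intD by simp
    fix v :: 'a
    show "\<bar>indicator ?B v * (?G v - ?\<rho>)\<bar> \<le> ?e * indicator ?B v + s * indicator (?B - ?B') v"
    proof (cases "v \<in> ?B")
      case False then show ?thesis using s C0_nonneg by (simp add: indicator_def)
    next
      case True
      have e0: "0 \<le> ?e" using s C0_nonneg by simp
      show ?thesis
      proof (cases "v \<in> ?B'")
        case True
        have "\<bar>?G v - ?\<rho>\<bar> \<le> ?e"
          using G_bound[OF s bx_meas bx_bdd L(1) inner_ball[OF L(1) True]] .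
        then show ?thesis using \<open>v \<in> ?B\<close> True s by (simp add: indicator_def)
      next
        case False
        have "\<bar>?G v - ?\<rho>\<bar> \<le> s" using Gb[of v] rb \<open>v \<in> ?B\<close> by (simp add: indicator_def abs_le_iff)
        then show ?thesis using \<open>v \<in> ?B\<close> False e0 by (simp add: indicator_def)
      qed
    qed
  qed
  also have "integral\<^sup>L lborel (\<lambda>v. ?e * indicator ?B v + s * indicator (?B - ?B') v)
      = ?e * measure lborel ?B + s * measure lborel (?B - ?B')"
    using intB intD by simp
  also have "measure lborel (?B - ?B') = measure lborel ?B - measure lborel ?B'"
  proof (rule measure_Diff)
    show "emeasure lborel ?B \<noteq> \<infinity>" using finB by (simp add: infinity_ennreal_def less_imp_neq)
    show "?B' \<subseteq> ?B" using bx_mono[of "n - L" n] L by simp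
  qed auto
  finally show ?thesis .
qed

end


context mainctx begin

lemma avg_conv:
  assumes s: "0 < s" "s \<le> lam"
  shows "(\<lambda>n. (LBINT v:bx (real n). rho_fin \<phi> (\<lambda>x. s * indicator (bx (real n)) x) v) / measure lborel (bx (real n) :: 'a set))
     \<longlonglongrightarrow> rho \<phi> (\<lambda>_. s) 0"
proof (rule LIMSEQ_I)
  fix e :: real assume e: "0 < e"
  let ?\<rho> = "rho \<phi> (\<lambda>_. s) 0"
  let ?d = "DIM('a)"
  obtain M :: nat where M: "\<forall>t\<ge>real M. (s * C0) * exp (- \<beta> * (t - r)) < e / 2"
    using exp_small[OF beta0, of "e / 2" "s * C0" r] e s C0_nonneg by auto
  define L where "L = real M + 1"
  have L0: "0 < L" unfolding L_def by simp
  have eL: "s * (C0 * exp (- \<beta> * (L - r))) < e / 2" using M unfolding L_def by (simp add: mult.assoc)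
  define q where "q n = (1 - L / real n) ^ ?d" for n :: nat
  have "(\<lambda>n. 1 - L / real n) \<longlonglongrightarrow> 1 - 0"
    by (intro tendsto_intros lim_const_over_n)
  then have "q \<longlonglongrightarrow> 1 ^ ?d" unfolding q_def by (intro tendsto_intros) simp
  then have "(\<lambda>n. s * (1 - q n)) \<longlonglongrightarrow> s * (1 - 1)" by (intro tendsto_intros) simp
  then obtain N1 where N1: "\<forall>n\<ge>N1. \<bar>s * (1 - q n) - 0\<bar> < e / 2"
    using e by (auto dest!: LIMSEQ_D[of _ _ "e / 2"])
  have "norm ((LBINT v:bx (real n). rho_fin \<phi> (\<lambda>x. s * indicator (bx (real n)) x) v) / measure lborel (bx (real n) :: 'a set) - ?\<rho>) < e"
    if n: "n \<ge> max N1 (M + 1)" for n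
  proof -
    have nL: "L \<le> real n" using n unfolding L_def by simp
    have n0: "0 < real n" using nL L0 by simp
    define V where "V = measure lborel (bx (real n) :: 'a set)"
    define V' where "V' = measure lborel (bx (real n - L) :: 'a set)"
    have V: "V = (2 * real n) ^ ?d" unfolding V_def using n0 by (intro V_eq) simp
    have V': "V' = (2 * (real n - L)) ^ ?d" unfolding V'_def using nL by (intro V_eq) simp
    have Vpos: "0 < V" unfolding V using n0 by simp
    have qn: "V' / V = q n"
    proof -
      have "V' / V = ((2 * (real n - L)) / (2 * real n)) ^ ?d" unfolding V V' by (simp add: power_divide)
      also have "(2 * (real n - L)) / (2 * real n) = 1 - L / real n" using n0 by (simp add: field_simps)
      finally show ?thesis unfolding q_def .
    qed
    define I where "I = (LBINT v:bx (real n). rho_fin \<phi> (\<lambda>x. s * indicator (bx (real n)) x) v)"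
    have ab: "\<bar>I - ?\<rho> * V\<bar> \<le> s * (C0 * exp (- \<beta> * (L - r))) * V + s * (V - V')"
      unfolding I_def V_def V'_def by (rule avg_bound[OF s L0 nL])
    have "\<bar>I / V - ?\<rho>\<bar> = \<bar>I - ?\<rho> * V\<bar> / V" using Vpos by (simp add: field_simps abs_divide)
    also have "\<dots> \<le> (s * (C0 * exp (- \<beta> * (L - r))) * V + s * (V - V')) / V"
      using ab Vpos by (simp add: divide_right_mono)
    also have "\<dots> = s * (C0 * exp (- \<beta> * (L - r))) + s * (1 - V' / V)"
      using Vpos by (simp add: field_simps)
    also have "\<dots> < e / 2 + e / 2"
    proof -
      have "\<bar>s * (1 - q n) - 0\<bar> < e / 2" using N1 n by simp
      then have "s * (1 - V' / V) < e / 2" unfolding qn by simp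
      then show ?thesis using eL by linarith
    qed
    finally show ?thesis unfolding I_def V_def by simp
  qed
  then show "\<exists>no. \<forall>n\<ge>no. norm ((LBINT v:bx (real n). rho_fin \<phi> (\<lambda>x. s * indicator (bx (real n)) x) v) / measure lborel (bx (real n) :: 'a set) - ?\<rho>) < e"
    by blast
qed

end


context boxctx begin

lemma Zr0: "Zr \<phi> \<Lambda> 0 = 1"
  unfolding Zr_def by (simp add: ac_def)

lemma Zr_isCont: "isCont (Zr \<phi> \<Lambda>) x" using Zr_deriv DERIV_isCont by blast
lemma Zd_isCont: "isCont (Zd \<phi> \<Lambda>) x" using Zd_deriv DERIV_isCont by blast

end

context mainctx begin

definition "Dn n t = (1 / Zr \<phi> (bx (real n)) (t * lam) * (Zd \<phi> (bx (real n)) (t * lam) * lam)) / (2 * real n) ^ DIM('a)"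

lemma Dn_cont: "continuous_on {0..1} (Dn n)" "continuous_on {0<..1} (Dn n)"
proof -
  interpret boxctx \<phi> "bx (real n) :: 'a set" by unfold_locales (auto intro: phi0 bx_bdd)
  have c: "isCont (Dn n) t" if t: "0 \<le> t" for t
  proof (cases "n = 0")
    case True
    then have "Dn n = (\<lambda>_. 0)" by (auto simp: Dn_def fun_eq_iff)
    then show ?thesis by simp
  next
    case False
    have Z: "Zr \<phi> (bx (real n)) (t * lam) \<noteq> 0" using Zr_ge1[of "t * lam"] t lam0 by simp
    have c1: "isCont (\<lambda>t. Zr \<phi> (bx (real n)) (t * lam)) t"
      by (rule isCont_o2[OF _ Zr_isCont]) (intro continuous_intros)
    have c2: "isCont (\<lambda>t. Zd \<phi> (bx (real n)) (t * lam)) t"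
      by (rule isCont_o2[OF _ Zd_isCont]) (intro continuous_intros)
    show ?thesis unfolding Dn_def[abs_def] using c1 c2 Z False by (intro continuous_intros) auto
  qed
  show "continuous_on {0..1} (Dn n)" by (intro continuous_at_imp_continuous_on ballI c) auto
  show "continuous_on {0<..1} (Dn n)" by (intro continuous_at_imp_continuous_on ballI c) auto
qed

lemma press_eq:
  assumes n: "1 \<le> n"
  shows "press_seq \<phi> lam n = integral\<^sup>L lborel (\<lambda>t. indicator {0..1} t * Dn n t)"
proof -
  let ?B = "bx (real n) :: 'a set"
  interpret boxctx \<phi> ?B by unfold_locales (auto intro: phi0 bx_bdd)
  let ?f = "\<lambda>t. 1 / Zr \<phi> ?B (t * lam) * (Zd \<phi> ?B (t * lam) * lam)"
  let ?F = "\<lambda>t. ln (Zr \<phi> ?B (t * lam))"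
  have cf: "continuous_on {0..1} ?f"
  proof -
    have cc: "continuous_on {0..1} (\<lambda>t. Dn n t * (2 * real n) ^ DIM('a))"
      using Dn_cont(1) by (intro continuous_intros)
    have eq: "(\<lambda>t. Dn n t * (2 * real n) ^ DIM('a)) = ?f" using n by (auto simp: Dn_def fun_eq_iff)
    show ?thesis using cc unfolding eq .
  qed
  have dF: "(?F has_vector_derivative ?f t) (at t within {0..1})" if t: "0 \<le> t" for t
  proof -
    have Zp: "0 < Zr \<phi> ?B (t * lam)" using Zr_ge1[of "t * lam"] t lam0 by simp
    have d1: "((\<lambda>t. Zr \<phi> ?B (t * lam)) has_real_derivative Zd \<phi> ?B (t * lam) * lam) (at t)"
      by (rule DERIV_chain2[OF Zr_deriv]) (auto intro!: derivative_eq_intros)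
    have "(?F has_real_derivative ?f t) (at t)"
      by (rule DERIV_chain2[OF DERIV_ln_divide[OF Zp] d1])
    then show ?thesis
      by (simp add: has_real_derivative_iff_has_vector_derivative[symmetric] has_field_derivative_at_within)
  qed
  have "(LBINT t=ereal 0..ereal 1. ?f t) = ?F 1 - ?F 0"
    by (rule interval_integral_FTC_finite[where F="\<lambda>t. ln (Zr \<phi> ?B (t * lam))" and a=0 and b=1]) (use cf dF in auto)
  also have "?F 1 - ?F 0 = ln (Zr \<phi> ?B lam)" by (simp add: Zr0)
  finally have I: "(LBINT t:{0..1}. ?f t) = ln (Zr \<phi> ?B lam)" by (simp add: interval_integral_Icc[of 0 1, simplified])
  have "press_seq \<phi> lam n = ln (Zr \<phi> ?B lam) / (2 * real n) ^ DIM('a)"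
    unfolding press_seq_def bx_def[symmetric] Zbox_eq[OF less_imp_le[OF lam0]]
    using Zr_ge1[of lam] lam0 by simp
  also have "\<dots> = integral\<^sup>L lborel (\<lambda>t. indicator {0..1} t * ?f t) / (2 * real n) ^ DIM('a)"
    unfolding I[symmetric] set_lebesgue_integral_def by simp
  also have "\<dots> = integral\<^sup>L lborel (\<lambda>t. indicator {0..1} t * ?f t / (2 * real n) ^ DIM('a))"
    by (rule integral_divide_zero[symmetric])
  also have "(\<lambda>t. indicator {0..1} t * ?f t / (2 * real n) ^ DIM('a)) = (\<lambda>t. indicator {0..1} t * Dn n t)"
    by (simp add: Dn_def fun_eq_iff)
  finally show ?thesis .
qed

end


context mainctx begin

lemma intG:
  assumes s: "0 < s" "s \<le> lam"
  shows "integrable lborel (\<lambda>v. indicator (bx c) v * rho_fin \<phi> (\<lambda>x. s * indicator (bx c :: 'a set) x) v)"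
    "0 \<le> (LBINT v:bx c. rho_fin \<phi> (\<lambda>x. s * indicator (bx c :: 'a set) x) v)"
    "(LBINT v:bx c. rho_fin \<phi> (\<lambda>x. s * indicator (bx c :: 'a set) x) v) \<le> s * measure lborel (bx c :: 'a set)"
proof -
  let ?B = "bx c :: 'a set"
  let ?G = "\<lambda>v. rho_fin \<phi> (\<lambda>x. s * indicator ?B x) v"
  interpret boxctx \<phi> ?B by unfold_locales (auto intro: phi0 bx_bdd)
  have actB: "activity_le lam (\<lambda>x. s * indicator ?B x)" using s by (intro act_box bx_bdd) auto
  have Gm[measurable]: "?G \<in> borel_measurable borel" using rho_meas s by simp
  have Gb: "0 \<le> ?G v" "?G v \<le> s * indicator ?B v" for v
    using rho_fin_bounds[where \<phi>=\<phi> and v=v, OF actB phi0] by auto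
  have finB: "emeasure lborel ?B < top" using emeasure_bounded_finite[OF bx_bdd] by simp
  have intB: "integrable lborel (indicator ?B :: 'a \<Rightarrow> real)" using finB by simp
  show intG: "integrable lborel (\<lambda>v. indicator ?B v * ?G v)"
  proof (rule Bochner_Integration.integrable_bound[OF integrable_mult_right[OF intB, of s]])
    show "(\<lambda>v. indicator ?B v * ?G v) \<in> borel_measurable lborel" by measurable
    show "AE v in lborel. norm (indicator ?B v * ?G v) \<le> norm (s * indicator ?B v)"
    proof (rule AE_I2)
      fix v
      show "norm (indicator ?B v * ?G v) \<le> norm (s * indicator ?B v)"
        using Gb[of v] s by (cases "v \<in> ?B") (auto simp: indicator_def)
    qed
  qed
  have LB: "(LBINT v:?B. ?G v) = integral\<^sup>L lborel (\<lambda>v. indicator ?B v * ?G v)"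
    unfolding set_lebesgue_integral_def by simp
  show "0 \<le> (LBINT v:?B. ?G v)" unfolding LB by (intro integral_nonneg_AE AE_I2 mult_nonneg_nonneg) (auto simp: Gb)
  have "integral\<^sup>L lborel (\<lambda>v. indicator ?B v * ?G v) \<le> integral\<^sup>L lborel (\<lambda>v. s * indicator ?B v)"
  proof (rule integral_mono)
    show "integrable lborel (\<lambda>v. indicator ?B v * ?G v)" by (rule intG)
    show "integrable lborel (\<lambda>v. s * indicator ?B v)" by (rule integrable_mult_right[OF intB])
    fix v
    show "indicator ?B v * ?G v \<le> s * indicator ?B v"
      using Gb[of v] by (cases "v \<in> ?B") auto
  qed
  also have "\<dots> = s * measure lborel ?B" using intB by simp
  finally show "(LBINT v:?B. ?G v) \<le> s * measure lborel ?B" unfolding LB .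
qed

lemma Dn_rho:
  assumes n: "1 \<le> n" and t: "0 < t" "t \<le> 1"
  shows "Dn n t = ((LBINT v:bx (real n). rho_fin \<phi> (\<lambda>x. (t * lam) * indicator (bx (real n) :: 'a set) x) v)
      / measure lborel (bx (real n) :: 'a set)) / t"
proof -
  let ?B = "bx (real n) :: 'a set"
  interpret boxctx \<phi> ?B by unfold_locales (auto intro: phi0 bx_bdd)
  have s0: "0 \<le> t * lam" using t lam0 by simp
  have V: "measure lborel ?B = (2 * real n) ^ DIM('a)" by (rule V_eq) simp
  have Z: "Zr \<phi> ?B (t * lam) \<noteq> 0" using Zr_ge1[OF s0] by simp
  show ?thesis unfolding rho_int[OF phisym s0] V Dn_def using t Z by (simp add: field_simps)
qed

lemma Dn_conv:
  assumes t: "0 < t" "t \<le> 1"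
  shows "(\<lambda>n. Dn n t) \<longlonglongrightarrow> rho \<phi> (\<lambda>_. t * lam) 0 / t"
proof -
  have s: "0 < t * lam" "t * lam \<le> lam" using t lam0 by (auto simp: mult_le_cancel_right1)
  have "(\<lambda>n. ((LBINT v:bx (real n). rho_fin \<phi> (\<lambda>x. (t * lam) * indicator (bx (real n) :: 'a set) x) v)
      / measure lborel (bx (real n) :: 'a set)) / t) \<longlonglongrightarrow> rho \<phi> (\<lambda>_. t * lam) 0 / t"
    by (intro tendsto_divide avg_conv[OF s] tendsto_const) (use t in simp)
  moreover have "eventually (\<lambda>n. ((LBINT v:bx (real n). rho_fin \<phi> (\<lambda>x. (t * lam) * indicator (bx (real n) :: 'a set) x) v)
      / measure lborel (bx (real n) :: 'a set)) / t = Dn n t) sequentially"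
    using eventually_ge_at_top[of 1] by eventually_elim (use Dn_rho t in auto)
  ultimately show ?thesis by (rule Lim_transform_eventually)
qed

lemma Dn_bound:
  assumes t: "0 < t" "t \<le> 1"
  shows "0 \<le> Dn n t" "Dn n t \<le> lam"
proof -
  have "0 \<le> Dn n t \<and> Dn n t \<le> lam"
  proof (cases "n = 0")
    case True then show ?thesis using lam0 by (simp add: Dn_def zero_power[OF DIM_positive])
  next
    case False
    then have n: "1 \<le> n" by simp
    have s: "0 < t * lam" "t * lam \<le> lam" using t lam0 by (auto simp: mult_le_cancel_right1)
    define I where "I = (LBINT v:bx (real n). rho_fin \<phi> (\<lambda>x. (t * lam) * indicator (bx (real n) :: 'a set) x) v)"
    define V where "V = measure lborel (bx (real n) :: 'a set)"
    have Vp: "0 < V" unfolding V_def using n by (subst V_eq) auto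
    have I: "0 \<le> I" "I \<le> t * lam * V" unfolding I_def V_def using intG[OF s] by auto
    have D: "Dn n t = (I / V) / t" unfolding I_def V_def by (rule Dn_rho[OF n t])
    have "I / V \<le> t * lam" using I Vp by (simp add: divide_le_eq)
    then have "(I / V) / t \<le> (t * lam) / t" using t by (intro divide_right_mono) auto
    then have "(I / V) / t \<le> lam" using t by simp
    then show ?thesis unfolding D using I Vp t by simp
  qed
  then show "0 \<le> Dn n t" "Dn n t \<le> lam" by auto
qed

end


context mainctx begin

lemma main_conv: "press_seq \<phi> lam \<longlonglongrightarrow> (LBINT t:{0..1}. rho \<phi> (\<lambda>_. t * lam) 0 / t)"
proof -
  define sq where "sq n t = indicator {0<..1} t * Dn n t" for n t
  define f where "f t = indicator {0<..1} t * (rho \<phi> (\<lambda>_. t * lam) 0 / t)" for t :: real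
  have conv: "(\<lambda>n. sq n t) \<longlonglongrightarrow> f t" for t
  proof (cases "t \<in> {0<..1}")
    case True
    then show ?thesis unfolding sq_def f_def using Dn_conv[of t] by simp
  next
    case False
    then show ?thesis unfolding sq_def f_def by simp
  qed
  have msq: "sq n \<in> borel_measurable lborel" for n
  proof -
    have "(\<lambda>t. indicator {0<..1} t *\<^sub>R Dn n t) \<in> borel_measurable borel"
      by (rule borel_measurable_continuous_on_indicator[OF _ Dn_cont(2)]) simp
    then show ?thesis unfolding sq_def[abs_def] by simp
  qed
  have mf: "f \<in> borel_measurable lborel"
    by (rule borel_measurable_LIMSEQ_real[OF conv msq])
  have wint: "integrable lborel (\<lambda>t. lam * indicator {0..1::real} t)"
    by (intro integrable_mult_right integrable_real_indicator) auto
  have bound: "AE t in lborel. norm (sq n t) \<le> lam * indicator {0..1::real} t" for n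
  proof (rule AE_I2)
    fix t :: real
    show "norm (sq n t) \<le> lam * indicator {0..1::real} t"
    proof (cases "t \<in> {0<..1}")
      case True
      then show ?thesis unfolding sq_def using Dn_bound[of t n] by auto
    next
      case False
      then show ?thesis unfolding sq_def using lam0 by (auto simp: indicator_def)
    qed
  qed
  have lim: "(\<lambda>n. integral\<^sup>L lborel (sq n)) \<longlonglongrightarrow> integral\<^sup>L lborel f"
    by (rule integral_dominated_convergence[OF mf msq wint AE_I2[OF conv] bound])
  have fI: "integral\<^sup>L lborel f = (LBINT t:{0..1}. rho \<phi> (\<lambda>_. t * lam) 0 / t)"
  proof -
    have "(\<lambda>t. indicator {0..1::real} t *\<^sub>R (rho \<phi> (\<lambda>_. t * lam) 0 / t)) = f"
      by (auto simp: f_def fun_eq_iff indicator_def)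
    then show ?thesis unfolding set_lebesgue_integral_def by simp
  qed
  have ev: "eventually (\<lambda>n. integral\<^sup>L lborel (sq n) = press_seq \<phi> lam n) sequentially"
    using eventually_ge_at_top[of 1]
  proof eventually_elim
    case (elim n)
    have m2: "(\<lambda>t. indicator {0..1} t * Dn n t) \<in> borel_measurable lborel"
    proof -
      have "(\<lambda>t. indicator {0..1} t *\<^sub>R Dn n t) \<in> borel_measurable borel"
        by (rule borel_measurable_continuous_on_indicator[OF _ Dn_cont(1)]) simp
      then show ?thesis by simp
    qed
    have "integral\<^sup>L lborel (sq n) = integral\<^sup>L lborel (\<lambda>t. indicator {0..1} t * Dn n t)"
    proof (rule integral_cong_AE[OF msq m2])
      show "AE t in lborel. sq n t = indicator {0..1} t * Dn n t"
        using AE_lborel_singleton[of "0::real"]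
        by eventually_elim (auto simp: sq_def indicator_def)
    qed
    also have "\<dots> = press_seq \<phi> lam n" using press_eq[OF elim] by simp
    finally show ?case .
  qed
  show ?thesis using lim unfolding fI by (rule Lim_transform_eventually) (rule ev)
qed

end

theorem lemma20:
  fixes \<phi> :: "'a::euclidean_space \<Rightarrow> real" and lam :: real
  assumes "pot_ok \<phi>" and "lam > 0" and "ssm \<phi> lam"
  shows "press_seq \<phi> lam \<longlonglongrightarrow> (LBINT t:{0..1}. rho \<phi> (\<lambda>_. t * lam) 0 / t)"
proof -
  from assms(1) obtain r where pm: "\<phi> \<in> borel_measurable borel" and psym: "\<And>x. \<phi> (- x) = \<phi> x"
    and p0: "\<And>x. 0 \<le> \<phi> x" and pr: "\<And>x. norm x > r \<Longrightarrow> \<phi> x = 0"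
    unfolding pot_ok_def by blast
  from assms(3) obtain \<alpha> \<beta> where ab: "\<alpha> > 0" "\<beta> > 0" and
    bnd: "\<And>f g \<Lambda> A. activity_le lam f \<Longrightarrow> activity_le lam g \<Longrightarrow> \<Lambda> \<in> sets lborel \<Longrightarrow> bounded \<Lambda> \<Longrightarrow>
      config_event A \<Longrightarrow>
      \<bar>gibbs_prob \<phi> f \<Lambda> A - gibbs_prob \<phi> g \<Lambda> A\<bar>
        \<le> \<alpha> * measure lborel \<Lambda> * exp (- \<beta> * setdist \<Lambda> (closure {x. f x \<noteq> g x}))"
    unfolding ssm_def by blast
  interpret mainctx \<phi> lam "max r 0" \<alpha> \<beta>
  proof
    show "\<And>x. norm x > max r 0 \<Longrightarrow> \<phi> x = 0" using pr by simp
  qed (use pm psym p0 assms(2) ab bnd in auto)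
  show ?thesis by (rule main_conv)
qed


end
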